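(* Let $X$ be a compact Hausdorff space, $N\ge1$, and $\phi_1,\dots,\phi_m$ real-valued continuous functions on $X$. For $d\ge1$ let $\mathcal C(X,d,\boldsymbol\phi)$ be the set of $d\times d$ matrix-valued Borel measures $\mu$ on $X$ with $\mu(\Delta)\ge0$ for all Borel $\Delta$, $\mu(X)=I_d$, and $\int_X\phi_r\,d\mu=0$ for $r=1,\dots,m$. Suppose the positive $N\times N$ matrix measure $\mu$ has the form $\mu=\sum_{k=1}^N\mu_kP_k$, where $P_1,\dots,P_N$ are pairwise orthogonal rank-one orthogonal projections on $\mathbb C^N$ with $\sum_{k=1}^NP_k=I_N$, and $\mu_1,\dots,\mu_N$ are scalar measures (not necessarily distinct and not necessarily with disjoint supports) each of which is an extreme point of $\mathcal C(X,1,\boldsymbol\phi)$. Then $\mu$ is an extreme point of $\mathcal C(X,N,\boldsymbol\phi)$. *)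

theory Defs
  imports "HOL-Analysis.Analysis" "HOL-Library.Numeral_Type"
begin

definition qform :: "complex^'n \<Rightarrow> complex^'n^'n \<Rightarrow> complex" where
  "qform v A = (\<Sum>i\<in>UNIV. cnj (v$i) * (A *v v)$i)"

definition psd_mat :: "complex^'n^'n \<Rightarrow> bool" where
  "psd_mat A \<longleftrightarrow> (\<forall>v. qform v A \<in> \<real> \<and> 0 \<le> Re (qform v A))"

definition cmat_scale :: "complex \<Rightarrow> complex^'n^'m \<Rightarrow> complex^'n^'m" where
  "cmat_scale c A = (\<chi> i j. c * A$i$j)"

definition adjoint_mat :: "complex^'n^'m \<Rightarrow> complex^'m^'n" where
  "adjoint_mat A = (\<chi> i j. cnj (A$j$i))"

definition rank_one_orth_proj :: "complex^'n^'n \<Rightarrow> bool" where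
  "rank_one_orth_proj P \<longleftrightarrow> adjoint_mat P = P \<and> P ** P = P \<and> rank P = 1"

text \<open>A d x d matrix-valued Borel measure on the space 'a: a countably additive
  map from the Borel sets to matrices (taken to be 0 on non-Borel sets, so that
  such measures are determined by their values on Borel sets).\<close>
definition matrix_measure :: "('a::topological_space set \<Rightarrow> complex^'n^'n) \<Rightarrow> bool" where
  "matrix_measure \<mu> \<longleftrightarrow>
     (\<forall>A. A \<notin> sets borel \<longrightarrow> \<mu> A = 0) \<and>
     (\<forall>A::nat \<Rightarrow> 'a set. range A \<subseteq> sets borel \<longrightarrow> disjoint_family A \<longrightarrow>
        (\<lambda>n. \<mu> (A n)) sums \<mu> (\<Union>n. A n))"

definition qmeasure :: "('a::topological_space set \<Rightarrow> complex^'n^'n) \<Rightarrow> complex^'n \<Rightarrow> 'a measure" where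
  "qmeasure \<mu> v = measure_of UNIV (sets borel) (\<lambda>A. ennreal (Re (qform v (\<mu> A))))"

text \<open>Integral of a real function against a positive matrix measure, computed
  entrywise; the (i,j) entry (a complex measure) is recovered from the positive
  scalar measures v* mu v by polarization:
  mu_ij = 1/4 sum_{k=0..3} conj(i^k) (e_i + i^k e_j)* mu (e_i + i^k e_j).\<close>
definition mat_integral :: "('a::topological_space set \<Rightarrow> complex^'n^'n) \<Rightarrow> ('a \<Rightarrow> real) \<Rightarrow> complex^'n^'n" where
  "mat_integral \<mu> f = (\<chi> i j. (1/4) * (\<Sum>k<(4::nat).
      cnj (\<i>^k) * complex_of_real (integral\<^sup>L (qmeasure \<mu> (axis i 1 + axis j (\<i>^k))) f)))"

text \<open>The set C(X,d,phi) (with d = CARD('n)).\<close>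
definition Cset :: "nat \<Rightarrow> (nat \<Rightarrow> 'a::topological_space \<Rightarrow> real) \<Rightarrow> ('a set \<Rightarrow> complex^'n^'n) set" where
  "Cset m \<phi> = {\<mu>. matrix_measure \<mu> \<and> (\<forall>A\<in>sets borel. psd_mat (\<mu> A)) \<and>
      \<mu> UNIV = mat 1 \<and> (\<forall>r\<in>{1..m}. mat_integral \<mu> (\<phi> r) = 0)}"

definition extreme_point_mm :: "('a set \<Rightarrow> complex^'n^'n) \<Rightarrow> ('a set \<Rightarrow> complex^'n^'n) set \<Rightarrow> bool" where
  "extreme_point_mm \<mu> S \<longleftrightarrow> \<mu> \<in> S \<and>
     (\<forall>\<nu>1\<in>S. \<forall>\<nu>2\<in>S. \<forall>t::real. 0 < t \<and> t < 1 \<and> \<mu> = (\<lambda>A. t *\<^sub>R \<nu>1 A + (1 - t) *\<^sub>R \<nu>2 A)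
        \<longrightarrow> \<nu>1 = \<nu>2)"

end

theory Submission
  imports Defs
begin


definition ca :: "('a::topological_space set \<Rightarrow> real) \<Rightarrow> bool" where
 "ca m \<longleftrightarrow> (\<forall>A\<in>sets borel. 0 \<le> m A) \<and> (\<forall>F::nat\<Rightarrow>'a set. range F \<subseteq> sets borel \<longrightarrow> disjoint_family F \<longrightarrow> (\<lambda>n. m (F n)) sums m (\<Union>n. F n))"

definition mm :: "('a::topological_space set \<Rightarrow> real) \<Rightarrow> 'a measure" where
 "mm m = measure_of UNIV (sets borel) (\<lambda>A. ennreal (m A))"

lemma ca_empty: assumes "ca m" shows "m {} = 0"
proof -
  have "(\<lambda>n. m {}) sums m (\<Union>n::nat. {})"
    using assms unfolding ca_def by (auto simp: disjoint_family_on_def)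
  then have "(\<lambda>n::nat. m {}) \<longlonglongrightarrow> 0" by (intro summable_LIMSEQ_zero sums_summable)
  then show ?thesis using LIMSEQ_const_iff by blast
qed

lemma mm_sets[simp]: "sets (mm m) = sets borel" and mm_space[simp]: "space (mm m) = UNIV"
  unfolding mm_def using sets.sigma_sets_eq[of borel] by (simp_all add: sets_measure_of_conv space_measure_of_conv sets.space_closed)

lemma emeasure_mm: assumes "ca m" "A \<in> sets borel" shows "emeasure (mm m) A = ennreal (m A)"
  unfolding mm_def
proof (rule emeasure_measure_of_sigma)
  show "sigma_algebra UNIV (sets borel)" using sets.sigma_algebra_axioms[of borel] by simp
  show "positive (sets borel) (\<lambda>A. ennreal (m A))" using ca_empty[OF assms(1)] by (simp add: positive_def)
  show "countably_additive (sets borel) (\<lambda>A. ennreal (m A))"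
    unfolding countably_additive_def
  proof safe
    fix F :: "nat \<Rightarrow> 'a set" assume F: "range F \<subseteq> sets borel" "disjoint_family F"
    have s: "(\<lambda>n. m (F n)) sums m (\<Union>n. F n)" using assms(1) F unfolding ca_def by blast
    have nn: "\<And>n. 0 \<le> m (F n)" using assms(1) F unfolding ca_def by auto
    show "(\<Sum>n. ennreal (m (F n))) = ennreal (m (\<Union>n. F n))"
      using suminf_ennreal2[OF nn sums_summable[OF s]] sums_unique[OF s] by simp
  qed
qed (use assms in auto)

lemma finite_measure_mm: assumes "ca m" shows "finite_measure (mm m)"
  by (rule finite_measureI) (simp add: emeasure_mm[OF assms] )

lemma measure_mm: assumes "ca m" "A \<in> sets borel" shows "measure (mm m) A = m A"
  using emeasure_mm[OF assms] assms unfolding measure_def ca_def by auto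

lemma nn_comb:
  fixes N :: "'j \<Rightarrow> 'a::topological_space measure" and a b :: "'j \<Rightarrow> ennreal"
  assumes J: "finite J" and S: "\<And>j. j\<in>J \<Longrightarrow> sets (N j) = sets borel"
    and E: "\<And>A. A \<in> sets borel \<Longrightarrow> (\<Sum>j\<in>J. a j * emeasure (N j) A) = (\<Sum>j\<in>J. b j * emeasure (N j) A)"
    and f: "f \<in> borel_measurable borel"
  shows "(\<Sum>j\<in>J. a j * nn_integral (N j) f) = (\<Sum>j\<in>J. b j * nn_integral (N j) f)"
  using f
proof induct
  case (cong f g)
  then have "f = g" by auto
  then show ?case using cong by simp
next
  case (set A)
  have "\<And>j. j \<in> J \<Longrightarrow> nn_integral (N j) (indicator A) = emeasure (N j) A"
    using S set by (intro nn_integral_indicator) auto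
  then show ?case using E[OF set] by simp
next
  case (mult u c)
  have "\<And>j. j \<in> J \<Longrightarrow> nn_integral (N j) (\<lambda>x. c * u x) = c * nn_integral (N j) u"
    using S mult by (intro nn_integral_cmult) (auto cong: measurable_cong_sets)
  then have "(\<Sum>j\<in>J. a j * nn_integral (N j) (\<lambda>x. c * u x)) = c * (\<Sum>j\<in>J. a j * nn_integral (N j) u)"
     "(\<Sum>j\<in>J. b j * nn_integral (N j) (\<lambda>x. c * u x)) = c * (\<Sum>j\<in>J. b j * nn_integral (N j) u)"
    by (auto simp: sum_distrib_left mult_ac intro!: sum.cong)
  then show ?case using mult by simp
next
  case (add u v)
  have "\<And>j. j \<in> J \<Longrightarrow> nn_integral (N j) (\<lambda>x. v x + u x) = nn_integral (N j) v + nn_integral (N j) u"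
    using S add by (intro nn_integral_add) (auto cong: measurable_cong_sets)
  then show ?case using add by (simp add: distrib_left sum.distrib)
next
  case (seq U)
  have U: "\<And>i j. j \<in> J \<Longrightarrow> U i \<in> borel_measurable (N j)" using S seq by (auto cong: measurable_cong_sets)
  have eq: "\<And>j. j \<in> J \<Longrightarrow> nn_integral (N j) (SUP i. U i) = (SUP i. nn_integral (N j) (U i))"
  proof -
    fix j assume "j \<in> J"
    have "(SUP i. U i) = (\<lambda>x. SUP i. U i x)" by (rule ext) (simp add: image_image)
    then show "nn_integral (N j) (SUP i. U i) = (SUP i. nn_integral (N j) (U i))"
      using nn_integral_monotone_convergence_SUP[OF seq(4) U[OF \<open>j \<in> J\<close>]] by simp
  qed
  have inc: "\<And>j. incseq (\<lambda>i. nn_integral (N j) (U i))"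
    using seq(4) by (intro monoI nn_integral_mono) (auto simp: incseq_def le_fun_def)
  have "\<And>c. (\<Sum>j\<in>J. c j * nn_integral (N j) (SUP i. U i)) = (SUP i. \<Sum>j\<in>J. c j * nn_integral (N j) (U i))"
  proof -
    fix c :: "'j \<Rightarrow> ennreal"
    have "(\<Sum>j\<in>J. c j * nn_integral (N j) (SUP i. U i)) = (\<Sum>j\<in>J. SUP i. c j * nn_integral (N j) (U i))"
      using eq by (simp add: SUP_mult_left_ennreal)
    also have "\<dots> = (SUP i. \<Sum>j\<in>J. c j * nn_integral (N j) (U i))"
      using inc by (intro ennreal_SUP_sum[symmetric]) (auto simp: incseq_def mult_left_mono)
    finally show "(\<Sum>j\<in>J. c j * nn_integral (N j) (SUP i. U i)) = (SUP i. \<Sum>j\<in>J. c j * nn_integral (N j) (U i))" .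
  qed
  from this[of a] this[of b] show ?case by (simp only: seq(3))
qed

lemma sum_ennreal_mult:
  assumes "\<And>j. j \<in> J \<Longrightarrow> 0 \<le> a j \<and> 0 \<le> x j"
  shows "(\<Sum>j\<in>J. ennreal (a j) * ennreal (x j)) = ennreal (\<Sum>j\<in>J. a j * x j)"
proof -
  have "(\<Sum>j\<in>J. ennreal (a j) * ennreal (x j)) = (\<Sum>j\<in>J. ennreal (a j * x j))"
    using assms by (intro sum.cong) (auto simp: ennreal_mult)
  also have "\<dots> = ennreal (\<Sum>j\<in>J. a j * x j)" using assms by (intro sum_ennreal) auto
  finally show ?thesis .
qed

lemma int_comb_pos:
  fixes N :: "'j \<Rightarrow> 'a::topological_space measure" and a b :: "'j \<Rightarrow> real"
  assumes J: "finite J" and S: "\<And>j. j\<in>J \<Longrightarrow> sets (N j) = sets borel"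
    and F: "\<And>j. j\<in>J \<Longrightarrow> finite_measure (N j)"
    and pos: "\<And>j. j\<in>J \<Longrightarrow> 0 \<le> a j \<and> 0 \<le> b j"
    and E: "\<And>A. A \<in> sets borel \<Longrightarrow> (\<Sum>j\<in>J. a j * measure (N j) A) = (\<Sum>j\<in>J. b j * measure (N j) A)"
    and f: "f \<in> borel_measurable borel" and bd: "\<And>x. \<bar>f x\<bar> \<le> B"
  shows "(\<Sum>j\<in>J. a j * integral\<^sup>L (N j) f) = (\<Sum>j\<in>J. b j * integral\<^sup>L (N j) f)"
proof -
  have key: "(\<Sum>j\<in>J. a j * integral\<^sup>L (N j) g) = (\<Sum>j\<in>J. b j * integral\<^sup>L (N j) g)"
    if g: "g \<in> borel_measurable borel" and gb: "\<And>x. 0 \<le> g x \<and> g x \<le> B" for g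
  proof -
    have gm: "\<And>j. j \<in> J \<Longrightarrow> g \<in> borel_measurable (N j)" using S g by (auto cong: measurable_cong_sets)
    have int: "\<And>j. j \<in> J \<Longrightarrow> integrable (N j) g"
      using gm gb F by (intro finite_measure.integrable_const_bound[where B=B]) auto
    have nn: "\<And>j. j \<in> J \<Longrightarrow> (\<integral>\<^sup>+x. ennreal (g x) \<partial>N j) = ennreal (integral\<^sup>L (N j) g)"
      using int gb by (intro nn_integral_eq_integral) auto
    have ipos: "\<And>j. j \<in> J \<Longrightarrow> 0 \<le> integral\<^sup>L (N j) g" using gb by (simp add: integral_nonneg)
    have em: "\<And>j A. j \<in> J \<Longrightarrow> emeasure (N j) A = ennreal (measure (N j) A)"
      using F by (intro finite_measure.emeasure_eq_measure) auto
    have "(\<Sum>j\<in>J. ennreal (a j) * nn_integral (N j) (\<lambda>x. ennreal (g x)))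
        = (\<Sum>j\<in>J. ennreal (b j) * nn_integral (N j) (\<lambda>x. ennreal (g x)))"
    proof (rule nn_comb[OF J S])
      fix A :: "'a set" assume A: "A \<in> sets borel"
      have "(\<Sum>j\<in>J. ennreal (a j) * emeasure (N j) A) = ennreal (\<Sum>j\<in>J. a j * measure (N j) A)"
        using pos by (simp add: em sum_ennreal_mult)
      also have "\<dots> = ennreal (\<Sum>j\<in>J. b j * measure (N j) A)" using E[OF A] by simp
      also have "\<dots> = (\<Sum>j\<in>J. ennreal (b j) * emeasure (N j) A)"
        using pos by (simp add: em sum_ennreal_mult)
      finally show "(\<Sum>j\<in>J. ennreal (a j) * emeasure (N j) A) = (\<Sum>j\<in>J. ennreal (b j) * emeasure (N j) A)" .
    qed (use g in auto)
    then have "ennreal (\<Sum>j\<in>J. a j * integral\<^sup>L (N j) g) = ennreal (\<Sum>j\<in>J. b j * integral\<^sup>L (N j) g)"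
      using pos ipos by (simp add: nn sum_ennreal_mult)
    then show ?thesis using pos ipos by (subst (asm) ennreal_inj) (auto intro!: sum_nonneg)
  qed
  define g1 where "g1 x = max 0 (f x)" for x
  define g2 where "g2 x = max 0 (- f x)" for x
  have fg: "f = (\<lambda>x. g1 x - g2 x)" by (auto simp: g1_def g2_def)
  have B0: "0 \<le> B" using bd[of undefined] by simp
  have m1: "g1 \<in> borel_measurable borel" unfolding g1_def[abs_def] using f by measurable
  have m2: "g2 \<in> borel_measurable borel" unfolding g2_def[abs_def] using f by measurable
  have k1: "(\<Sum>j\<in>J. a j * integral\<^sup>L (N j) g1) = (\<Sum>j\<in>J. b j * integral\<^sup>L (N j) g1)"
    using bd B0 m1 by (intro key) (auto simp: g1_def abs_le_iff)
  have k2: "(\<Sum>j\<in>J. a j * integral\<^sup>L (N j) g2) = (\<Sum>j\<in>J. b j * integral\<^sup>L (N j) g2)"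
    using bd B0 m2 by (intro key) (auto simp: g2_def abs_le_iff)
  have int: "\<And>j g. j \<in> J \<Longrightarrow> g \<in> borel_measurable borel \<Longrightarrow> (\<And>x. \<bar>g x\<bar> \<le> B) \<Longrightarrow> integrable (N j) g"
    using S F by (intro finite_measure.integrable_const_bound[where B=B]) (auto cong: measurable_cong_sets)
  have i1: "\<And>j. j \<in> J \<Longrightarrow> integrable (N j) g1" using bd B0 m1 by (intro int) (auto simp: g1_def abs_le_iff)
  have i2: "\<And>j. j \<in> J \<Longrightarrow> integrable (N j) g2" using bd B0 m2 by (intro int) (auto simp: g2_def abs_le_iff)
  have "\<And>c. (\<Sum>j\<in>J. c j * integral\<^sup>L (N j) f) = (\<Sum>j\<in>J. c j * integral\<^sup>L (N j) g1) - (\<Sum>j\<in>J. c j * integral\<^sup>L (N j) g2)"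
    unfolding fg sum_subtractf[symmetric] using i1 i2 by (intro sum.cong) (auto simp: right_diff_distrib)
  then show ?thesis using k1 k2 by simp
qed

lemma sum_option_split:
  fixes g :: "'j option \<Rightarrow> 'b::comm_monoid_add"
  assumes "finite J"
  shows "(\<Sum>p\<in>insert None (Some ` J). g p) = g None + (\<Sum>j\<in>J. g (Some j))"
  using assms by (subst sum.insert) (auto simp: sum.reindex)

lemma int_comb:
  fixes m :: "'a::topological_space set \<Rightarrow> real"
  assumes J: "finite J" and m: "ca m" and mj: "\<And>j. j\<in>J \<Longrightarrow> ca (mj j)"
    and E: "\<And>A. A \<in> sets borel \<Longrightarrow> m A = (\<Sum>j\<in>J. c j * mj j A)"
    and f: "f \<in> borel_measurable borel" and bd: "\<And>x. \<bar>f x\<bar> \<le> B"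
  shows "integral\<^sup>L (mm m) f = (\<Sum>j\<in>J. c j * integral\<^sup>L (mm (mj j)) f)"
proof -
  define N where "N p = (case p of None \<Rightarrow> mm m | Some j \<Rightarrow> mm (mj j))" for p
  define a where "a p = (case p of None \<Rightarrow> 1 | Some j \<Rightarrow> max 0 (- c j))" for p
  define b where "b p = (case p of None \<Rightarrow> 0 | Some j \<Rightarrow> max 0 (c j))" for p
  let ?J = "insert None (Some ` J)"
  have "(\<Sum>p\<in>?J. a p * integral\<^sup>L (N p) f) = (\<Sum>p\<in>?J. b p * integral\<^sup>L (N p) f)"
  proof (rule int_comb_pos[OF _ _ _ _ _ f bd])
    show "finite ?J" using J by simp
    show "\<And>p. p \<in> ?J \<Longrightarrow> sets (N p) = sets borel" by (auto simp: N_def)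
    show "\<And>p. p \<in> ?J \<Longrightarrow> finite_measure (N p)" using m mj by (auto simp: N_def finite_measure_mm)
    show "\<And>p. p \<in> ?J \<Longrightarrow> 0 \<le> a p \<and> 0 \<le> b p" by (auto simp: a_def b_def)
    fix A :: "'a set" assume A: "A \<in> sets borel"
    have "(\<Sum>p\<in>?J. a p * measure (N p) A) = m A + (\<Sum>j\<in>J. max 0 (- c j) * mj j A)"
      using A m mj by (simp add: sum_option_split[OF J] a_def N_def measure_mm)
    also have "\<dots> = (\<Sum>j\<in>J. max 0 (c j) * mj j A)"
      unfolding E[OF A] sum.distrib[symmetric] by (intro sum.cong) (auto simp: max_def algebra_simps)
    also have "\<dots> = (\<Sum>p\<in>?J. b p * measure (N p) A)"
      using A m mj by (simp add: sum_option_split[OF J] b_def N_def measure_mm)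
    finally show "(\<Sum>p\<in>?J. a p * measure (N p) A) = (\<Sum>p\<in>?J. b p * measure (N p) A)" .
  qed
  then have "integral\<^sup>L (mm m) f + (\<Sum>j\<in>J. max 0 (- c j) * integral\<^sup>L (mm (mj j)) f)
     = (\<Sum>j\<in>J. max 0 (c j) * integral\<^sup>L (mm (mj j)) f)"
    by (simp add: sum_option_split[OF J] a_def b_def N_def)
  moreover have "(\<Sum>j\<in>J. c j * integral\<^sup>L (mm (mj j)) f) = (\<Sum>j\<in>J. max 0 (c j) * integral\<^sup>L (mm (mj j)) f) - (\<Sum>j\<in>J. max 0 (- c j) * integral\<^sup>L (mm (mj j)) f)"
    unfolding sum_subtractf[symmetric] by (intro sum.cong) (auto simp: max_def algebra_simps)
  ultimately show ?thesis by simp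
qed



definition cinner :: "complex^'n \<Rightarrow> complex^'n \<Rightarrow> complex" where
  "cinner x y = (\<Sum>i\<in>UNIV. cnj (x$i) * y$i)"

lemma qform_cinner: "qform v A = cinner v (A *v v)"
  by (simp add: qform_def cinner_def)

lemma cinner_add_right: "cinner x (y + z) = cinner x y + cinner x z"
  by (simp add: cinner_def distrib_left sum.distrib)
lemma cinner_add_left: "cinner (x + y) z = cinner x z + cinner y z"
  by (simp add: cinner_def distrib_right sum.distrib)
lemma cinner_diff_right: "cinner x (y - z) = cinner x y - cinner x z"
  by (simp add: cinner_def right_diff_distrib sum_subtractf)
lemma cinner_scale_right: "cinner x (c *s y) = c * cinner x y"
  by (simp add: cinner_def sum_distrib_left mult_ac)
lemma cinner_scale_left: "cinner (c *s x) y = cnj c * cinner x y"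
  by (simp add: cinner_def sum_distrib_left mult_ac)
lemma cinner_zero_right[simp]: "cinner x 0 = 0" by (simp add: cinner_def)
lemma cinner_zero_left[simp]: "cinner 0 x = 0" by (simp add: cinner_def)
lemma cinner_sum_right: "cinner x (\<Sum>k\<in>K. y k) = (\<Sum>k\<in>K. cinner x (y k))"
  by (induct K rule: infinite_finite_induct) (auto simp: cinner_add_right)
lemma cinner_sum_left: "cinner (\<Sum>k\<in>K. y k) x = (\<Sum>k\<in>K. cinner (y k) x)"
  by (induct K rule: infinite_finite_induct) (auto simp: cinner_add_left)
lemma cinner_cnj: "cinner y x = cnj (cinner x y)"
  by (simp add: cinner_def mult.commute)

lemma cinner_self: "cinner x x = complex_of_real (\<Sum>i\<in>UNIV. (cmod (x$i))\<^sup>2)"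
  by (simp add: cinner_def complex_norm_square mult.commute flip: of_real_power)

lemma cinner_self_pos: "x \<noteq> 0 \<Longrightarrow> 0 < (\<Sum>i\<in>UNIV. (cmod (x$i))\<^sup>2)"
proof -
  assume "x \<noteq> 0" then obtain i where "x$i \<noteq> 0" by (auto simp: vec_eq_iff)
  then have "0 < (cmod (x$i))\<^sup>2" by simp
  also have "\<dots> \<le> (\<Sum>i\<in>UNIV. (cmod (x$i))\<^sup>2)" by (rule member_le_sum) auto
  finally show ?thesis .
qed

lemma mv_add: "(A::complex^'n^'m) *v (x + y) = A *v x + A *v y"
  by (simp add: matrix_vector_right_distrib)
lemma mv_scale: "(A::complex^'n^'m) *v (c *s x) = c *s (A *v x)"
  by (simp add: vec_eq_iff matrix_vector_mult_def sum_distrib_left mult_ac)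
lemma mv_sum_right: "(A::complex^'n^'m) *v (\<Sum>k\<in>K. x k) = (\<Sum>k\<in>K. A *v x k)"
  by (induct K rule: infinite_finite_induct) (auto simp: mv_add)
lemma mv_sum_left: "(\<Sum>k\<in>K. A k) *v (x::complex^'n) = (\<Sum>k\<in>K. A k *v x)"
  by (induct K rule: infinite_finite_induct) (auto simp: matrix_vector_mult_add_rdistrib)
lemma mv_cmat_scale: "cmat_scale c A *v (x::complex^'n) = c *s (A *v x)"
  by (simp add: vec_eq_iff matrix_vector_mult_def cmat_scale_def sum_distrib_left mult_ac)
lemma mv_addm: "(A + B) *v (x::complex^'n) = A *v x + B *v x"
  by (simp add: matrix_vector_mult_add_rdistrib)
lemma mv_scaleR: "(r *\<^sub>R A) *v (x::complex^'n) = r *\<^sub>R (A *v x)"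
  by (simp add: vec_eq_iff matrix_vector_mult_def scaleR_sum_right)

lemma cinner_adj: "cinner y ((A::complex^'n^'n) *v x) = cinner (adjoint_mat A *v y) x"
proof -
  have "cinner y (A *v x) = (\<Sum>i\<in>UNIV. \<Sum>j\<in>UNIV. cnj (y$i) * A$i$j * x$j)"
    by (simp add: cinner_def matrix_vector_mult_def sum_distrib_left mult_ac)
  also have "\<dots> = (\<Sum>j\<in>UNIV. \<Sum>i\<in>UNIV. cnj (y$i) * A$i$j * x$j)" by (rule sum.swap)
  also have "\<dots> = cinner (adjoint_mat A *v y) x"
    by (simp add: cinner_def matrix_vector_mult_def adjoint_mat_def sum_distrib_left sum_distrib_right mult_ac)
  finally show ?thesis .
qed

lemma rank1_form:
  fixes P :: "complex^'n^'n"
  assumes "rank P = 1"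
  obtains b c where "\<And>x. P *v x = (\<Sum>j\<in>UNIV. b$j * x$j) *s c" and "P \<noteq> 0"
proof -
  obtain B where B: "B \<subseteq> rows P" "vec.independent B" "rows P \<subseteq> vec.span B" "card B = vec.dim (rows P)"
    using vec.basis_exists by blast
  then have "card B = 1" using assms by (simp add: row_rank_def_gen)
  then obtain b where b: "B = {b}" by (auto simp: card_Suc_eq)
  have "b \<noteq> 0" using B(2) b by simp
  from b B(1) obtain i0 where i0: "b = row i0 P" by (auto simp: rows_def)
  have "\<forall>i. \<exists>k. row i P = k *s b"
    using B(3) b by (auto simp: rows_def vec.span_singleton)
  then obtain c where c: "\<And>i. row i P = c i *s b" by metis
  have "P *v x = (\<Sum>j\<in>UNIV. b$j * x$j) *s (\<chi> i. c i)" for x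
  proof -
    have "P$i$j = c i * b$j" for i j using c[of i] by (simp add: vec_eq_iff row_def)
    then show ?thesis by (simp add: vec_eq_iff matrix_vector_mult_def sum_distrib_left mult_ac)
  qed
  moreover have "P \<noteq> 0" using \<open>b \<noteq> 0\<close> i0 by (auto simp: row_def vec_eq_iff)
  ultimately show ?thesis using that by blast
qed

lemma rank_one_proj_vec:
  fixes P :: "complex^'n^'n"
  assumes "rank_one_orth_proj P"
  obtains u where "cinner u u = 1" "\<And>x. P *v x = cinner u x *s u"
proof -
  have adj: "adjoint_mat P = P" and idem: "P ** P = P" and rk: "rank P = 1"
    using assms by (auto simp: rank_one_orth_proj_def)
  obtain b c where bc: "\<And>x. P *v x = (\<Sum>j\<in>UNIV. b$j * x$j) *s c" and P0: "P \<noteq> 0"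
    using rank1_form[OF rk] by blast
  define \<beta> where "\<beta> x = (\<Sum>j\<in>UNIV. b$j * x$j)" for x
  have Px: "\<And>x. P *v x = \<beta> x *s c" using bc by (simp add: \<beta>_def)
  obtain x0 where x0: "P *v x0 \<noteq> 0" using P0 matrix_eq[of P 0] by auto
  then have bx0: "\<beta> x0 \<noteq> 0" and c0: "c \<noteq> 0" by (auto simp: Px)
  have "P *v (P *v x0) = P *v x0" by (simp add: matrix_vector_mul_assoc idem)
  then have "\<beta> x0 * \<beta> c *s c = \<beta> x0 *s c" by (simp add: Px mv_scale)
  then have "(\<beta> x0 * \<beta> c) *s c = \<beta> x0 *s c" by (simp add: vector_smult_assoc)
  then have "\<beta> x0 * \<beta> c = \<beta> x0" using c0 by simp
  then have bc1: "\<beta> c = 1" using bx0 by simp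
  have Pc: "P *v c = c" by (simp add: Px bc1)
  define s where "s = (\<Sum>i\<in>UNIV. (cmod (c$i))\<^sup>2)"
  have s0: "0 < s" using cinner_self_pos[OF c0] by (simp add: s_def)
  have cc: "cinner c c = complex_of_real s" by (simp add: cinner_self s_def)
  have beta: "\<beta> x = cinner c x / complex_of_real s" for x
  proof -
    have "cinner c (P *v x) = cinner c x" using cinner_adj[of c P x] by (simp add: adj Pc)
    then have "\<beta> x * complex_of_real s = cinner c x" by (simp add: Px cinner_scale_right cc)
    then show ?thesis using s0 by (simp add: field_simps)
  qed
  define u where "u = complex_of_real (1 / sqrt s) *s c"
  have "cinner u u = 1"
  proof -
    have "complex_of_real (sqrt s) ^ 2 = complex_of_real s" using s0 by (simp flip: of_real_power)
    then show ?thesis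
      using s0 by (simp add: u_def cinner_scale_left cinner_scale_right cc power2_eq_square[symmetric]
        flip: of_real_mult)
  qed
  moreover have "P *v x = cinner u x *s u" for x
  proof -
    have "cinner u x *s u = (complex_of_real (1 / sqrt s) * complex_of_real (1 / sqrt s) * cinner c x) *s c"
      by (simp add: u_def cinner_scale_left vector_smult_assoc mult_ac)
    also have "complex_of_real (1 / sqrt s) * complex_of_real (1 / sqrt s) = complex_of_real (1 / s)"
      using s0 by (simp flip: of_real_mult add: real_sqrt_mult[symmetric])
    finally show ?thesis using s0 by (simp add: Px beta field_simps)
  qed
  ultimately show ?thesis using that by blast
qed



definition cs :: "('a::topological_space set \<Rightarrow> real) \<Rightarrow> bool" where
 "cs m \<longleftrightarrow> (\<forall>F::nat\<Rightarrow>'a set. range F \<subseteq> sets borel \<longrightarrow> disjoint_family F \<longrightarrow> (\<lambda>n. m (F n)) sums m (\<Union>n. F n))"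

lemma ca_cs: "ca m \<longleftrightarrow> (\<forall>A\<in>sets borel. 0 \<le> m A) \<and> cs m" by (simp add: ca_def cs_def)

lemma cs_lin: "cs m1 \<Longrightarrow> cs m2 \<Longrightarrow> cs (\<lambda>A. a * m1 A + b * m2 A)"
  unfolding cs_def by (auto intro!: sums_add sums_mult)

lemma cs_scale: "cs m1 \<Longrightarrow> cs (\<lambda>A. a * m1 A)"
  unfolding cs_def by (auto intro!: sums_mult)

lemma cs_sum: "(\<And>i. i\<in>I \<Longrightarrow> cs (m i)) \<Longrightarrow> cs (\<lambda>A. \<Sum>i\<in>I. m i A)"
  unfolding cs_def by (auto intro!: sums_sum)

lemma cs_restr: assumes "cs m" "E \<in> sets borel" shows "cs (\<lambda>A. m (A \<inter> E))"
  unfolding cs_def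
proof safe
  fix F :: "nat \<Rightarrow> 'a set" assume F: "range F \<subseteq> sets borel" "disjoint_family F"
  have "range (\<lambda>n. F n \<inter> E) \<subseteq> sets borel" using F assms by auto
  moreover have "disjoint_family (\<lambda>n. F n \<inter> E)" using F(2) by (auto simp: disjoint_family_on_def)
  ultimately have "(\<lambda>n. m (F n \<inter> E)) sums m (\<Union>n. F n \<inter> E)" using assms(1) unfolding cs_def by blast
  moreover have "(\<Union>n. F n \<inter> E) = (\<Union>n. F n) \<inter> E" by auto
  ultimately show "(\<lambda>n. m (F n \<inter> E)) sums m ((\<Union>n. F n) \<inter> E)" by simp
qed

lemma ca_restr: assumes "ca m" "E \<in> sets borel" shows "ca (\<lambda>A. m (A \<inter> E))"
  using assms cs_restr[of m E] by (auto simp: ca_cs)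

lemma ca_mono: assumes "ca m" "A \<subseteq> B" "B \<in> sets borel" "A \<in> sets borel" shows "m A \<le> m B"
  using finite_measure.finite_measure_mono[OF finite_measure_mm[OF assms(1)], of A B] assms
  by (simp add: measure_mm)

lemma ca_add: assumes "ca m" "A \<in> sets borel" "B \<in> sets borel" "A \<inter> B = {}"
  shows "m (A \<union> B) = m A + m B"
  using measure_Union[of "mm m" A B] assms
  by (simp add: measure_mm emeasure_mm)

lemma ca_diff: assumes "ca m" "A \<subseteq> B" "B \<in> sets borel" "A \<in> sets borel" shows "m (B - A) = m B - m A"
proof -
  have "B = A \<union> (B - A)" using assms by auto
  then have "m B = m A + m (B - A)" using ca_add[OF assms(1), of A "B - A"] assms by auto
  then show ?thesis by simp
qed

lemma ca_UN: assumes "ca m" "finite S" "\<And>i. i\<in>S \<Longrightarrow> B i \<in> sets borel" "disjoint_family_on B S"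
  shows "m (\<Union>i\<in>S. B i) = (\<Sum>i\<in>S. m (B i))"
proof -
  have "measure (mm m) (\<Union>i\<in>S. B i) = (\<Sum>i\<in>S. measure (mm m) (B i))"
    using assms by (intro measure_finite_Union) (auto simp: emeasure_mm)
  moreover have "(\<Union>i\<in>S. B i) \<in> sets borel" using assms by auto
  ultimately show ?thesis using assms by (simp add: measure_mm)
qed

lemma ca_nonneg: "ca m \<Longrightarrow> A \<in> sets borel \<Longrightarrow> 0 \<le> m A" by (simp add: ca_def)

definition sC :: "nat \<Rightarrow> (nat \<Rightarrow> 'a::topological_space \<Rightarrow> real) \<Rightarrow> ('a set \<Rightarrow> real) \<Rightarrow> bool" where
  "sC m \<phi> m0 \<longleftrightarrow> ca m0 \<and> m0 UNIV = 1 \<and> (\<forall>r\<in>{1..m}. integral\<^sup>L (mm m0) (\<phi> r) = 0)"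

definition sext :: "nat \<Rightarrow> (nat \<Rightarrow> 'a::topological_space \<Rightarrow> real) \<Rightarrow> ('a set \<Rightarrow> real) \<Rightarrow> bool" where
  "sext m \<phi> m0 \<longleftrightarrow> sC m \<phi> m0 \<and> (\<forall>m1 m2 t. sC m \<phi> m1 \<longrightarrow> sC m \<phi> m2 \<longrightarrow> 0 < t \<longrightarrow> t < 1 \<longrightarrow>
      (\<forall>A\<in>sets borel. m0 A = t * m1 A + (1 - t) * m2 A) \<longrightarrow> (\<forall>A\<in>sets borel. m1 A = m2 A))"

definition phiok :: "nat \<Rightarrow> (nat \<Rightarrow> 'a::topological_space \<Rightarrow> real) \<Rightarrow> bool" where
  "phiok m \<phi> \<longleftrightarrow> (\<forall>r\<in>{1..m}. \<phi> r \<in> borel_measurable borel \<and> (\<exists>B. \<forall>x. \<bar>\<phi> r x\<bar> \<le> B))"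

lemma phiokE:
  assumes "phiok m \<phi>" "r \<in> {1..m}"
  obtains B where "\<phi> r \<in> borel_measurable borel" "\<And>x. \<bar>\<phi> r x\<bar> \<le> B"
proof -
  have "\<phi> r \<in> borel_measurable borel \<and> (\<exists>B. \<forall>x. \<bar>\<phi> r x\<bar> \<le> B)" using assms by (simp add: phiok_def)
  then show ?thesis using that by blast
qed

lemma sum_3split:
  fixes g :: "(bool + 'i) \<Rightarrow> 'b::comm_monoid_add"
  assumes "finite I"
  shows "(\<Sum>x\<in>insert (Inl True) (insert (Inl False) (Inr ` I)). g x) = g (Inl True) + g (Inl False) + (\<Sum>i\<in>I. g (Inr i))"
proof -
  have "(\<Sum>x\<in>insert (Inl True) (insert (Inl False) (Inr ` I)). g x) = g (Inl True) + (\<Sum>x\<in>insert (Inl False) (Inr ` I). g x)"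
    using assms by (intro sum.insert) auto
  also have "(\<Sum>x\<in>insert (Inl False) (Inr ` I). g x) = g (Inl False) + (\<Sum>x\<in>Inr ` I. g x)"
    using assms by (intro sum.insert) auto
  also have "(\<Sum>x\<in>Inr ` I. g x) = (\<Sum>i\<in>I. g (Inr i))" by (simp add: sum.reindex)
  finally show ?thesis by (simp add: add.assoc)
qed

lemma int_comb3:
  fixes m :: "'a::topological_space set \<Rightarrow> real"
  assumes "ca m" "ca m1" "ca m2" "finite I" "\<And>i. i\<in>I \<Longrightarrow> ca (mr i)"
    and E: "\<And>A. A\<in>sets borel \<Longrightarrow> m A = c1 * m1 A + c2 * m2 A + (\<Sum>i\<in>I. a i * mr i A)"
    and f: "f \<in> borel_measurable borel" and bd: "\<And>x. \<bar>f x\<bar> \<le> B"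
  shows "integral\<^sup>L (mm m) f = c1 * integral\<^sup>L (mm m1) f + c2 * integral\<^sup>L (mm m2) f + (\<Sum>i\<in>I. a i * integral\<^sup>L (mm (mr i)) f)"
proof -
  define mj where "mj x = (case x of Inl True \<Rightarrow> m1 | Inl False \<Rightarrow> m2 | Inr i \<Rightarrow> mr i)" for x
  define c where "c x = (case x of Inl True \<Rightarrow> c1 | Inl False \<Rightarrow> c2 | Inr i \<Rightarrow> a i)" for x
  let ?J = "insert (Inl True) (insert (Inl False) (Inr ` I))"
  have "integral\<^sup>L (mm m) f = (\<Sum>j\<in>?J. c j * integral\<^sup>L (mm (mj j)) f)"
  proof (rule int_comb[OF _ assms(1) _ _ f bd])
    show "finite ?J" using assms(4) by simp
    show "\<And>j. j \<in> ?J \<Longrightarrow> ca (mj j)" using assms(2,3,5) by (auto simp: mj_def)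
    show "\<And>A. A \<in> sets borel \<Longrightarrow> m A = (\<Sum>j\<in>?J. c j * mj j A)"
      using E assms(4) by (simp add: sum_3split c_def mj_def)
  qed
  then show ?thesis using assms(4) by (simp add: sum_3split c_def mj_def)
qed

lemma EXT:
  assumes ext: "sext m \<phi> m0" and ph: "phiok m \<phi>" and fin: "finite \<E>" and Eb: "\<E> \<subseteq> sets borel"
    and dis: "disjoint \<E>"
    and s0: "(\<Sum>E\<in>\<E>. a E * m0 E) = 0"
    and s1: "\<forall>r\<in>{1..m}. (\<Sum>E\<in>\<E>. a E * integral\<^sup>L (mm (\<lambda>A. m0 (A \<inter> E))) (\<phi> r)) = 0"
  shows "\<forall>E\<in>\<E>. a E * m0 E = 0"
proof -
  have sc: "sC m \<phi> m0" using ext by (simp add: sext_def)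
  then have ca0: "ca m0" and u0: "m0 UNIV = 1" and i0: "\<forall>r\<in>{1..m}. integral\<^sup>L (mm m0) (\<phi> r) = 0"
    by (auto simp: sC_def)
  define S where "S = (\<Sum>E\<in>\<E>. \<bar>a E\<bar>)"
  have S0: "0 \<le> S" by (simp add: S_def sum_nonneg)
  define \<epsilon> where "\<epsilon> = 1 / (1 + S)"
  have e0: "0 < \<epsilon>" using S0 by (simp add: \<epsilon>_def)
  have eS: "\<epsilon> * S \<le> 1" using S0 by (simp add: \<epsilon>_def field_simps)
  define g where "g A = (\<Sum>E\<in>\<E>. a E * m0 (A \<inter> E))" for A
  have gb: "\<bar>g A\<bar> \<le> S * m0 A" if A: "A \<in> sets borel" for A
  proof -
    have "\<bar>g A\<bar> \<le> (\<Sum>E\<in>\<E>. \<bar>a E * m0 (A \<inter> E)\<bar>)" unfolding g_def by (rule sum_abs)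
    also have "\<dots> \<le> (\<Sum>E\<in>\<E>. \<bar>a E\<bar> * m0 A)"
    proof (rule sum_mono)
      fix E assume "E \<in> \<E>"
      then have "0 \<le> m0 (A \<inter> E)" "m0 (A \<inter> E) \<le> m0 A" using Eb A ca0
        by (auto intro!: ca_nonneg ca_mono)
      then show "\<bar>a E * m0 (A \<inter> E)\<bar> \<le> \<bar>a E\<bar> * m0 A" by (simp add: abs_mult mult_left_mono)
    qed
    finally show ?thesis by (simp add: S_def sum_distrib_right)
  qed
  have csg: "cs g" unfolding g_def
    using ca0 Eb by (intro cs_sum cs_scale cs_restr) (auto simp: ca_cs)
  have carr: "\<And>E. E \<in> \<E> \<Longrightarrow> ca (\<lambda>A. m0 (A \<inter> E))" using ca0 Eb by (auto intro!: ca_restr)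
  have mem: "sC m \<phi> (\<lambda>A. m0 A + s * \<epsilon> * g A)" if s: "\<bar>s\<bar> = 1" for s
  proof -
    have ca1: "ca (\<lambda>A. m0 A + s * \<epsilon> * g A)"
      unfolding ca_cs
    proof
      show "\<forall>A\<in>sets borel. 0 \<le> m0 A + s * \<epsilon> * g A"
      proof
        fix A :: "'a set" assume A: "A \<in> sets borel"
        have "\<bar>s * \<epsilon> * g A\<bar> \<le> \<epsilon> * (S * m0 A)" using gb[OF A] s e0
          by (simp add: abs_mult mult_left_mono)
        also have "\<dots> = (\<epsilon> * S) * m0 A" by simp
        also have "\<dots> \<le> 1 * m0 A" by (rule mult_right_mono[OF eS ca_nonneg[OF ca0 A]])
        finally show "0 \<le> m0 A + s * \<epsilon> * g A" by linarith
      qed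
      show "cs (\<lambda>A. m0 A + s * \<epsilon> * g A)"
        using cs_lin[of m0 g 1 "s * \<epsilon>"] ca0 csg by (simp add: ca_cs)
    qed
    have "g UNIV = 0" using s0 by (simp add: g_def)
    then have u1: "m0 UNIV + s * \<epsilon> * g UNIV = 1" using u0 by simp
    have "\<forall>r\<in>{1..m}. integral\<^sup>L (mm (\<lambda>A. m0 A + s * \<epsilon> * g A)) (\<phi> r) = 0"
    proof
      fix r assume r: "r \<in> {1..m}"
      obtain B where fm: "\<phi> r \<in> borel_measurable borel" and B: "\<And>x. \<bar>\<phi> r x\<bar> \<le> B"
        using phiokE[OF ph r] by blast
      have eqA: "\<And>A. A \<in> sets borel \<Longrightarrow> m0 A + s * \<epsilon> * g A = 1 * m0 A + 0 * m0 A + (\<Sum>E\<in>\<E>. (s * \<epsilon> * a E) * m0 (A \<inter> E))"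
        by (simp add: g_def sum_distrib_left mult.assoc)
      have "integral\<^sup>L (mm (\<lambda>A. m0 A + s * \<epsilon> * g A)) (\<phi> r) = 1 * integral\<^sup>L (mm m0) (\<phi> r) + 0 * integral\<^sup>L (mm m0) (\<phi> r)
        + (\<Sum>E\<in>\<E>. (s * \<epsilon> * a E) * integral\<^sup>L (mm (\<lambda>A. m0 (A \<inter> E))) (\<phi> r))"
        by (rule int_comb3[OF ca1 ca0 ca0 fin carr eqA fm B])
      also have "\<dots> = s * \<epsilon> * (\<Sum>E\<in>\<E>. a E * integral\<^sup>L (mm (\<lambda>A. m0 (A \<inter> E))) (\<phi> r))"
        using i0 r by (simp add: sum_distrib_left mult_ac)
      also have "\<dots> = 0" using s1 r by simp
      finally show "integral\<^sup>L (mm (\<lambda>A. m0 A + s * \<epsilon> * g A)) (\<phi> r) = 0" .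
    qed
    then show ?thesis using ca1 u1 by (simp add: sC_def)
  qed
  have h0: "\<forall>A\<in>sets borel. m0 A = (1/2) * (m0 A + 1 * \<epsilon> * g A) + (1 - 1/2) * (m0 A + (-1) * \<epsilon> * g A)"
    by (simp add: algebra_simps)
  have mp: "sC m \<phi> (\<lambda>A. m0 A + 1 * \<epsilon> * g A)" by (rule mem) simp
  have mn: "sC m \<phi> (\<lambda>A. m0 A + (-1) * \<epsilon> * g A)" by (rule mem) simp
  have E2: "\<forall>m1 m2 t. sC m \<phi> m1 \<longrightarrow> sC m \<phi> m2 \<longrightarrow> 0 < t \<longrightarrow> t < 1 \<longrightarrow>
      (\<forall>A\<in>sets borel. m0 A = t * m1 A + (1 - t) * m2 A) \<longrightarrow> (\<forall>A\<in>sets borel. m1 A = m2 A)"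
    using ext by (simp add: sext_def)
  have eq: "\<forall>A\<in>sets borel. m0 A + 1 * \<epsilon> * g A = m0 A + (-1) * \<epsilon> * g A"
  proof
    fix A :: "'a set" assume A: "A \<in> sets borel"
    have t: "0 < (1/2::real)" "(1/2::real) < 1" by auto
    show "m0 A + 1 * \<epsilon> * g A = m0 A + (-1) * \<epsilon> * g A"
      using E2[rule_format, OF mp mn t h0[rule_format] A] by simp
  qed
  show ?thesis
  proof
    fix E0 assume E0: "E0 \<in> \<E>"
    have "g E0 = 0" using eq E0 Eb e0 by auto
    moreover have "g E0 = a E0 * m0 E0"
    proof -
      have "g E0 = a E0 * m0 (E0 \<inter> E0) + (\<Sum>E\<in>\<E> - {E0}. a E * m0 (E0 \<inter> E))"
        unfolding g_def using fin E0 by (simp add: sum.remove)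
      also have "(\<Sum>E\<in>\<E> - {E0}. a E * m0 (E0 \<inter> E)) = 0"
      proof (intro sum.neutral ballI)
        fix E assume "E \<in> \<E> - {E0}"
        then have "E0 \<inter> E = {}" using dis E0 by (auto simp: pairwise_def disjnt_def)
        then show "a E * m0 (E0 \<inter> E) = 0" using ca_empty[OF ca0] by simp
      qed
      finally show ?thesis by simp
    qed
    ultimately show "a E0 * m0 E0 = 0" by simp
  qed
qed



lemma LA:
  fixes f :: "'i \<Rightarrow> nat \<Rightarrow> real"
  shows "finite I \<Longrightarrow> n < card I \<Longrightarrow> \<exists>a. (\<exists>i\<in>I. a i \<noteq> 0) \<and> (\<forall>r<n. (\<Sum>i\<in>I. a i * f i r) = 0)"
proof (induction n arbitrary: I f)
  case 0
  then obtain i where "i \<in> I" by fastforce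
  then show ?case by (intro exI[of _ "\<lambda>j. if j = i then 1 else 0"]) auto
next
  case (Suc n)
  show ?case
  proof (cases "\<forall>i\<in>I. f i n = 0")
    case True
    obtain a where a: "\<exists>i\<in>I. a i \<noteq> 0" "\<forall>r<n. (\<Sum>i\<in>I. a i * f i r) = 0"
      using Suc.IH[of I f] Suc.prems by auto
    have "\<forall>r<Suc n. (\<Sum>i\<in>I. a i * f i r) = 0"
      using a(2) True by (auto simp: less_Suc_eq)
    then show ?thesis using a(1) by blast
  next
    case False
    then obtain i0 where i0: "i0 \<in> I" "f i0 n \<noteq> 0" by blast
    define I' where "I' = I - {i0}"
    have fI': "finite I'" using Suc.prems by (simp add: I'_def)
    have cI': "n < card I'" using Suc.prems i0 by (simp add: I'_def)
    define g where "g i r = f i r - f i n / f i0 n * f i0 r" for i r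
    obtain a' where a': "\<exists>i\<in>I'. a' i \<noteq> 0" "\<forall>r<n. (\<Sum>i\<in>I'. a' i * g i r) = 0"
      using Suc.IH[OF fI' cI', of g] by blast
    define c where "c = - (\<Sum>j\<in>I'. a' j * f j n) / f i0 n"
    define a where "a i = (if i = i0 then c else a' i)" for i
    have split: "(\<Sum>i\<in>I. a i * f i r) = c * f i0 r + (\<Sum>i\<in>I'. a' i * f i r)" for r
    proof -
      have "(\<Sum>i\<in>I. a i * f i r) = a i0 * f i0 r + (\<Sum>i\<in>I'. a i * f i r)"
        unfolding I'_def using Suc.prems i0 by (simp add: sum.remove)
      also have "(\<Sum>i\<in>I'. a i * f i r) = (\<Sum>i\<in>I'. a' i * f i r)"
        by (intro sum.cong) (auto simp: a_def I'_def)
      finally show ?thesis by (simp add: a_def)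
    qed
    have "\<forall>r<Suc n. (\<Sum>i\<in>I. a i * f i r) = 0"
    proof (intro allI impI)
      fix r assume r: "r < Suc n"
      show "(\<Sum>i\<in>I. a i * f i r) = 0"
      proof (cases "r = n")
        case True
        then show ?thesis using i0 by (simp add: split c_def)
      next
        case False
        then have "r < n" using r by simp
        then have "(\<Sum>i\<in>I'. a' i * g i r) = 0" using a'(2) by blast
        moreover have "(\<Sum>i\<in>I'. a' i * g i r) = (\<Sum>i\<in>I'. a' i * f i r) - (\<Sum>i\<in>I'. a' i * (f i n / f i0 n * f i0 r))"
          by (simp add: g_def right_diff_distrib sum_subtractf)
        moreover have "(\<Sum>i\<in>I'. a' i * (f i n / f i0 n * f i0 r)) = (\<Sum>i\<in>I'. a' i * f i n) / f i0 n * f i0 r"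
          unfolding sum_divide_distrib sum_distrib_right by (intro sum.cong) auto
        moreover have "c * f i0 r = - ((\<Sum>i\<in>I'. a' i * f i n) / f i0 n * f i0 r)"
          by (simp add: c_def)
        ultimately show ?thesis by (simp add: split)
      qed
    qed
    moreover have "\<exists>i\<in>I. a i \<noteq> 0" using a'(1) by (auto simp: a_def I'_def)
    ultimately show ?thesis by blast
  qed
qed

lemma BOUND:
  assumes ext: "sext m \<phi> m0" and ph: "phiok m \<phi>" and fin: "finite \<E>" and Eb: "\<E> \<subseteq> sets borel"
    and dis: "disjoint \<E>" and pos: "\<forall>E\<in>\<E>. 0 < m0 E"
  shows "card \<E> \<le> m + 1"
proof (rule ccontr)
  assume "\<not> card \<E> \<le> m + 1"
  then have "m + 1 < card \<E>" by simp
  define f where "f E r = (if r = 0 then m0 E else integral\<^sup>L (mm (\<lambda>A. m0 (A \<inter> E))) (\<phi> r))" for E r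
  obtain a where a: "\<exists>E\<in>\<E>. a E \<noteq> 0" "\<forall>r<m+1. (\<Sum>E\<in>\<E>. a E * f E r) = 0"
    using LA[OF fin \<open>m + 1 < card \<E>\<close>, of f] by blast
  have s0: "(\<Sum>E\<in>\<E>. a E * m0 E) = 0" using a(2)[rule_format, of 0] by (simp add: f_def)
  have s1: "\<forall>r\<in>{1..m}. (\<Sum>E\<in>\<E>. a E * integral\<^sup>L (mm (\<lambda>A. m0 (A \<inter> E))) (\<phi> r)) = 0"
  proof
    fix r assume r: "r \<in> {1..m}"
    then have "r < m + 1" "r \<noteq> 0" by auto
    then show "(\<Sum>E\<in>\<E>. a E * integral\<^sup>L (mm (\<lambda>A. m0 (A \<inter> E))) (\<phi> r)) = 0"
      using a(2)[rule_format, of r] by (simp add: f_def)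
  qed
  have "\<forall>E\<in>\<E>. a E * m0 E = 0" by (rule EXT[OF ext ph fin Eb dis s0 s1])
  then show False using a(1) pos by (metis mult_eq_0_iff order_less_irrefl)
qed

lemma ATOMS:
  assumes ext: "sext m \<phi> m0" and ph: "phiok m \<phi>"
  obtains \<E> where "finite \<E>" "\<E> \<subseteq> sets borel" "disjoint \<E>" "\<forall>E\<in>\<E>. 0 < m0 E"
    "\<forall>E\<in>\<E>. \<forall>B\<in>sets borel. B \<subseteq> E \<longrightarrow> m0 B = 0 \<or> m0 B = m0 E" "m0 (UNIV - \<Union>\<E>) = 0"
proof -
  have ca0: "ca m0" using ext by (simp add: sext_def sC_def)
  define Q where "Q \<E> \<longleftrightarrow> finite \<E> \<and> \<E> \<subseteq> sets borel \<and> disjoint \<E> \<and> (\<forall>E\<in>\<E>. 0 < m0 E)" for \<E>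
  define P where "P n \<longleftrightarrow> (\<exists>\<E>. Q \<E> \<and> card \<E> = n)" for n
  have "P 0" unfolding P_def Q_def by (intro exI[of _ "{}"]) auto
  moreover have "\<forall>n. P n \<longrightarrow> n < m + 2" using BOUND[OF ext ph] by (fastforce simp: P_def Q_def)
  ultimately obtain n where "P n" and mxn: "\<forall>k. P k \<longrightarrow> k \<le> n" using ex_has_greatest_nat[of P 0 "\<lambda>x. x" "m+2"] by blast
  then obtain \<E> where Q: "Q \<E>" and cn: "card \<E> = n" by (auto simp: P_def)
  have mx: "\<And>\<F>. Q \<F> \<Longrightarrow> card \<F> \<le> card \<E>" using mxn cn by (auto simp: P_def)
  have fin: "finite \<E>" and Eb: "\<E> \<subseteq> sets borel" and dis: "disjoint \<E>" and pos: "\<forall>E\<in>\<E>. 0 < m0 E"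
    using Q by (auto simp: Q_def)
  have atom: "\<forall>E\<in>\<E>. \<forall>B\<in>sets borel. B \<subseteq> E \<longrightarrow> m0 B = 0 \<or> m0 B = m0 E"
  proof (rule ccontr)
    assume "\<not> ?thesis"
    then obtain E B where E: "E \<in> \<E>" and B: "B \<in> sets borel" "B \<subseteq> E" and nB: "m0 B \<noteq> 0" "m0 B \<noteq> m0 E"
      by blast
    have EB: "E \<in> sets borel" using E Eb by auto
    have "0 \<le> m0 B" using ca_nonneg[OF ca0 B(1)] .
    then have pB: "0 < m0 B" using nB by simp
    have "m0 B \<le> m0 E" using ca_mono[OF ca0 B(2) EB B(1)] .
    then have "m0 B < m0 E" using nB by simp
    then have pEB: "0 < m0 (E - B)" using ca_diff[OF ca0 B(2) EB B(1)] by simp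
    have Bne: "B \<noteq> {}" using pB ca_empty[OF ca0] by auto
    have EBne: "E - B \<noteq> {}"
    proof
      assume h: "E - B = {}"
      have "m0 (E - B) = 0" unfolding h using ca_empty[OF ca0] .
      then show False using pEB by simp
    qed
    have disE: "\<And>E'. E' \<in> \<E> \<Longrightarrow> E' \<noteq> E \<Longrightarrow> E \<inter> E' = {}"
      using dis E by (auto simp: pairwise_def disjnt_def)
    define \<F> where "\<F> = insert B (insert (E - B) (\<E> - {E}))"
    have n1: "B \<notin> insert (E - B) (\<E> - {E})"
      using Bne B(2) disE by auto
    have n2: "E - B \<notin> \<E> - {E}" using EBne disE by auto
    have "Q \<F>"
      unfolding Q_def \<F>_def
    proof (intro conjI)
      show "finite (insert B (insert (E - B) (\<E> - {E})))" using fin by simp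
      show "insert B (insert (E - B) (\<E> - {E})) \<subseteq> sets borel" using Eb B EB by auto
      show "disjoint (insert B (insert (E - B) (\<E> - {E})))"
        using dis disE B(2) by (auto simp: pairwise_def disjnt_def)
      show "\<forall>E'\<in>insert B (insert (E - B) (\<E> - {E})). 0 < m0 E'" using pos pB pEB by auto
    qed
    moreover have "card \<F> = card \<E> + 1"
    proof -
      have "card \<F> = Suc (Suc (card (\<E> - {E})))" unfolding \<F>_def using n1 n2 fin by simp
      moreover have "card (\<E> - {E}) = card \<E> - 1" using E fin by simp
      moreover have "card \<E> \<ge> 1" using E fin by (metis card_0_eq empty_iff less_one not_le)
      ultimately show ?thesis by simp
    qed
    ultimately show False using mx[of \<F>] by simp
  qed
  have UE: "\<Union>\<E> \<in> sets borel" using fin Eb by (intro sets.finite_Union) auto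
  have rem: "m0 (UNIV - \<Union>\<E>) = 0"
  proof (rule ccontr)
    assume nz: "m0 (UNIV - \<Union>\<E>) \<noteq> 0"
    define R where "R = UNIV - \<Union>\<E>"
    have Rb: "R \<in> sets borel" using UE by (simp add: R_def)
    have pR: "0 < m0 R" using nz ca_nonneg[OF ca0 Rb] by (simp add: R_def)
    have Rne: "R \<noteq> {}" using pR ca_empty[OF ca0] by auto
    have nR: "R \<notin> \<E>" using Rne by (auto simp: R_def)
    have "Q (insert R \<E>)"
      unfolding Q_def
    proof (intro conjI)
      show "finite (insert R \<E>)" using fin by simp
      show "insert R \<E> \<subseteq> sets borel" using Eb Rb by auto
      show "disjoint (insert R \<E>)" using dis by (auto simp: pairwise_def disjnt_def R_def)
      show "\<forall>E'\<in>insert R \<E>. 0 < m0 E'" using pos pR by auto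
    qed
    moreover have "card (insert R \<E>) = card \<E> + 1" using nR fin by simp
    ultimately show False using mx[of "insert R \<E>"] by simp
  qed
  show ?thesis using that fin Eb dis pos atom rem by blast
qed

lemma OFF:
  assumes ext: "sext m \<phi> mj" and ph: "phiok m \<phi>" and ck: "sC m \<phi> mk"
    and cp: "ca p" and ip: "\<forall>r\<in>{1..m}. integral\<^sup>L (mm p) (\<phi> r) = 0" and pU: "p UNIV = 2"
    and hp: "\<forall>A\<in>sets borel. p A = mj A + mk A + 2 * h A"
    and hz: "\<forall>A\<in>sets borel. mj A = 0 \<longrightarrow> h A = 0"
  shows "\<forall>A\<in>sets borel. h A = 0"
proof -
  have sj: "sC m \<phi> mj" using ext by (simp add: sext_def)
  then have caj: "ca mj" and uj: "mj UNIV = 1" and ij: "\<forall>r\<in>{1..m}. integral\<^sup>L (mm mj) (\<phi> r) = 0"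
    by (auto simp: sC_def)
  have cak: "ca mk" and uk: "mk UNIV = 1" and ik: "\<forall>r\<in>{1..m}. integral\<^sup>L (mm mk) (\<phi> r) = 0"
    using ck by (auto simp: sC_def)
  obtain \<E> where fin: "finite \<E>" and Eb: "\<E> \<subseteq> sets borel" and dis: "disjoint \<E>"
    and pos: "\<forall>E\<in>\<E>. 0 < mj E"
    and atom: "\<forall>E\<in>\<E>. \<forall>B\<in>sets borel. B \<subseteq> E \<longrightarrow> mj B = 0 \<or> mj B = mj E"
    and rem: "mj (UNIV - \<Union>\<E>) = 0"
    using ATOMS[OF ext ph] by blast
  have hdef: "\<And>A. A \<in> sets borel \<Longrightarrow> h A = (p A - mj A - mk A) / 2" using hp by auto
  have hadd: "h (A \<union> B) = h A + h B" if "A \<in> sets borel" "B \<in> sets borel" "A \<inter> B = {}" for A B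
    using that ca_add[OF cp that] ca_add[OF caj that] ca_add[OF cak that] by (simp add: hdef field_simps)
  have UE: "\<Union>\<E> \<in> sets borel" using fin Eb by (intro sets.finite_Union) auto
  have hUN: "h (\<Union>E\<in>\<E>. A \<inter> E) = (\<Sum>E\<in>\<E>. h (A \<inter> E))" if A: "A \<in> sets borel" for A
  proof -
    have b: "\<And>E. E \<in> \<E> \<Longrightarrow> A \<inter> E \<in> sets borel" using A Eb by auto
    have d: "disjoint_family_on (\<lambda>E. A \<inter> E) \<E>" using dis by (auto simp: disjoint_family_on_def pairwise_def disjnt_def)
    have U: "(\<Union>E\<in>\<E>. A \<inter> E) \<in> sets borel" using A UE by auto
    show ?thesis
      using ca_UN[OF cp fin b d] ca_UN[OF caj fin b d] ca_UN[OF cak fin b d] U b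
      by (simp add: hdef sum_subtractf sum_divide_distrib[symmetric])
  qed
  define lam where "lam E = h E / mj E" for E
  have hrep: "h A = (\<Sum>E\<in>\<E>. lam E * mj (A \<inter> E))" if A: "A \<in> sets borel" for A
  proof -
    let ?U = "\<Union>E\<in>\<E>. A \<inter> E"
    have U: "?U \<in> sets borel" using A UE by auto
    have R: "A - \<Union>\<E> \<in> sets borel" using A UE by auto
    have "A = ?U \<union> (A - \<Union>\<E>)" by auto
    then have "h A = h ?U + h (A - \<Union>\<E>)" using hadd[OF U R] by auto
    moreover have "h (A - \<Union>\<E>) = 0"
    proof -
      have "mj (A - \<Union>\<E>) \<le> mj (UNIV - \<Union>\<E>)" using UE R by (intro ca_mono[OF caj]) auto
      then have "mj (A - \<Union>\<E>) = 0" using rem ca_nonneg[OF caj R] by simp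
      then show ?thesis using hz R by auto
    qed
    moreover have "h (A \<inter> E) = lam E * mj (A \<inter> E)" if E: "E \<in> \<E>" for E
    proof -
      have EB: "E \<in> sets borel" and AE: "A \<inter> E \<in> sets borel" using E Eb A by auto
      have "mj (A \<inter> E) = 0 \<or> mj (A \<inter> E) = mj E" using atom E AE by auto
      then show ?thesis
      proof
        assume "mj (A \<inter> E) = 0" then show ?thesis using hz AE by simp
      next
        assume eq: "mj (A \<inter> E) = mj E"
        have D: "E - A \<inter> E \<in> sets borel" using EB AE by auto
        have "mj (E - A \<inter> E) = 0" using ca_diff[OF caj _ EB AE] eq by simp
        then have "h (E - A \<inter> E) = 0" using hz D by simp
        moreover have "E = (A \<inter> E) \<union> (E - A \<inter> E)" by auto
        ultimately have hE: "h E = h (A \<inter> E)" using hadd[OF AE D] by force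
        have "mj E \<noteq> 0" using pos E by auto
        then have "lam E * mj (A \<inter> E) = h E" unfolding lam_def eq by simp
        then show ?thesis using hE by simp
      qed
    qed
    ultimately show ?thesis using hUN[OF A] by simp
  qed
  have hU: "h UNIV = 0" using hp pU uj uk by auto
  have s0: "(\<Sum>E\<in>\<E>. lam E * mj E) = 0" using hrep[of UNIV] hU by simp
  have carr: "\<And>E. E \<in> \<E> \<Longrightarrow> ca (\<lambda>A. mj (A \<inter> E))" using caj Eb by (auto intro!: ca_restr)
  have s1: "\<forall>r\<in>{1..m}. (\<Sum>E\<in>\<E>. lam E * integral\<^sup>L (mm (\<lambda>A. mj (A \<inter> E))) (\<phi> r)) = 0"
  proof
    fix r assume r: "r \<in> {1..m}"
    obtain B where fm: "\<phi> r \<in> borel_measurable borel" and B: "\<And>x. \<bar>\<phi> r x\<bar> \<le> B"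
      using phiokE[OF ph r] by blast
    have eqA: "\<And>A. A \<in> sets borel \<Longrightarrow> p A = 1 * mj A + 1 * mk A + (\<Sum>E\<in>\<E>. (2 * lam E) * mj (A \<inter> E))"
      using hp hrep by (simp add: sum_distrib_left mult.assoc)
    have "integral\<^sup>L (mm p) (\<phi> r) = 1 * integral\<^sup>L (mm mj) (\<phi> r) + 1 * integral\<^sup>L (mm mk) (\<phi> r)
       + (\<Sum>E\<in>\<E>. (2 * lam E) * integral\<^sup>L (mm (\<lambda>A. mj (A \<inter> E))) (\<phi> r))"
      by (rule int_comb3[OF cp caj cak fin carr eqA fm B])
    then show "(\<Sum>E\<in>\<E>. lam E * integral\<^sup>L (mm (\<lambda>A. mj (A \<inter> E))) (\<phi> r)) = 0"
      using ip ij ik r by (simp add: sum_distrib_left[symmetric] mult.assoc)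
  qed
  have "\<forall>E\<in>\<E>. lam E * mj E = 0" by (rule EXT[OF ext ph fin Eb dis s0 s1])
  then have "\<forall>E\<in>\<E>. lam E = 0" using pos by (metis less_irrefl mult_eq_0_iff)
  then show ?thesis using hrep by simp
qed



definition pmm :: "('a::topological_space set \<Rightarrow> complex^'n^'n) \<Rightarrow> bool" where
  "pmm \<nu> \<longleftrightarrow> matrix_measure \<nu> \<and> (\<forall>A\<in>sets borel. psd_mat (\<nu> A))"

definition qm :: "('a::topological_space set \<Rightarrow> complex^'n^'n) \<Rightarrow> complex^'n \<Rightarrow> 'a set \<Rightarrow> real" where
  "qm \<nu> v A = Re (qform v (\<nu> A))"

lemma qmeasure_eq: "qmeasure \<nu> v = mm (qm \<nu> v)"
  by (simp add: qmeasure_def mm_def qm_def)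

lemma qform_add: "qform v (A + B) = qform v A + qform v B"
  by (simp add: qform_cinner mv_addm cinner_add_right)
lemma qform_scaleR: "qform v (r *\<^sub>R A) = complex_of_real r * qform v A"
  unfolding qform_cinner mv_scaleR cinner_def vector_scaleR_component
  by (simp add: scaleR_conv_of_real sum_distrib_left mult_ac)
lemma qform_zero[simp]: "qform v 0 = 0"
  by (simp add: qform_def)
lemma qform_sum: "qform v (\<Sum>k\<in>K. A k) = (\<Sum>k\<in>K. qform v (A k))"
  by (induct K rule: infinite_finite_induct) (auto simp: qform_add)

lemma bl_qform: "bounded_linear (\<lambda>M::complex^'n^'n. Re (qform v M))"
proof -
  have "linear (\<lambda>M::complex^'n^'n. Re (qform v M))"
    by (intro linearI) (simp_all add: qform_add qform_scaleR)
  then show ?thesis using linear_conv_bounded_linear by blast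
qed

lemma mm_sums:
  assumes "bounded_linear L" "matrix_measure \<nu>" "range F \<subseteq> sets borel" "disjoint_family F"
  shows "(\<lambda>n. L (\<nu> (F n))) sums L (\<nu> (\<Union>n. F n))"
  using assms by (intro bounded_linear.sums[OF assms(1)]) (auto simp: matrix_measure_def)

lemma ca_qm: assumes "pmm \<nu>" shows "ca (qm \<nu> v)"
  unfolding ca_def
proof safe
  fix A :: "'a set" assume "A \<in> sets borel"
  then show "0 \<le> qm \<nu> v A" using assms by (simp add: pmm_def psd_mat_def qm_def)
next
  fix F :: "nat \<Rightarrow> 'a set" assume "range F \<subseteq> sets borel" "disjoint_family F"
  then show "(\<lambda>n. qm \<nu> v (F n)) sums qm \<nu> v (\<Union>n. F n)"
    using mm_sums[OF bl_qform[of v]] assms unfolding qm_def pmm_def by blast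
qed

lemma psd_real: "psd_mat M \<Longrightarrow> qform v M = complex_of_real (Re (qform v M))"
  by (simp add: psd_mat_def)

lemma qm_nonborel: "matrix_measure \<nu> \<Longrightarrow> A \<notin> sets borel \<Longrightarrow> \<nu> A = 0"
  by (simp add: matrix_measure_def)

lemma sum_axis_r: "(\<Sum>q\<in>UNIV. g q * (axis i a)$q) = g i * (a::complex)"
proof -
  have "(\<Sum>q\<in>UNIV. g q * (axis i a)$q) = (\<Sum>q\<in>UNIV. if q = i then g q * a else 0)"
    by (intro sum.cong) (auto simp: axis_def)
  also have "\<dots> = g i * a" by simp
  finally show ?thesis .
qed
lemma sum_axis_l: "(\<Sum>q\<in>UNIV. cnj ((axis i a)$q) * g q) = cnj a * (g i::complex)"
proof -
  have "(\<Sum>q\<in>UNIV. cnj ((axis i a)$q) * g q) = (\<Sum>q\<in>UNIV. if q = i then cnj a * g q else 0)"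
    by (intro sum.cong) (auto simp: axis_def)
  also have "\<dots> = cnj a * g i" by simp
  finally show ?thesis .
qed
lemma qform_axis2:
  "qform (axis i a + axis l b) (M::complex^'n^'n) = cnj a * a * M$i$i + cnj a * b * M$i$l + cnj b * a * M$l$i + cnj b * b * M$l$l"
proof -
  have mv: "(M *v (axis i a + axis l b))$p = M$p$i * a + M$p$l * b" for p
    by (simp add: matrix_vector_mult_def distrib_left sum.distrib sum_axis_r)
  have "qform (axis i a + axis l b) M = (\<Sum>p\<in>UNIV. cnj ((axis i a)$p) * (M$p$i * a + M$p$l * b))
      + (\<Sum>p\<in>UNIV. cnj ((axis l b)$p) * (M$p$i * a + M$p$l * b))"
    by (simp add: qform_def mv distrib_right sum.distrib)
  also have "\<dots> = cnj a * (M$i$i * a + M$i$l * b) + cnj b * (M$l$i * a + M$l$l * b)"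
    by (simp only: sum_axis_l)
  finally show ?thesis by (simp add: algebra_simps)
qed

lemma sum4: "(\<Sum>k<(4::nat). f k) = f 0 + f 1 + f 2 + f (3::nat)"
  by (simp add: eval_nat_numeral)

lemma polar_aux: "(1/4) * (\<Sum>k<(4::nat). cnj (\<i>^k) * (a + \<i>^k * b + cnj (\<i>^k) * c + cnj (\<i>^k) * \<i>^k * d)) = (b::complex)"
  apply (simp only: sum4)
  apply (simp add: power3_eq_cube power2_eq_square)
  apply (simp add: algebra_simps)
  done

lemma polar: "M$i$l = (1/4) * (\<Sum>k<(4::nat). cnj (\<i>^k) * qform (axis i 1 + axis l (\<i>^k)) (M::complex^'n^'n))"
proof -
  have "\<And>k. qform (axis i 1 + axis l (\<i>^k)) M = M$i$i + \<i>^k * M$i$l + cnj (\<i>^k) * M$l$i + cnj (\<i>^k) * \<i>^k * M$l$l"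
    by (simp add: qform_axis2)
  then show ?thesis by (simp only: polar_aux)
qed

lemma qform_expand: "qform v (M::complex^'n^'n) = (\<Sum>i\<in>UNIV. \<Sum>l\<in>UNIV. cnj (v$i) * v$l * M$i$l)"
  by (simp add: qform_def matrix_vector_mult_def sum_distrib_left mult_ac)

lemma sum_triple:
  "(\<Sum>j\<in>UNIV \<times> UNIV \<times> {..<(4::nat)}. h j) = (\<Sum>i\<in>UNIV. \<Sum>l\<in>UNIV. \<Sum>k<4. h (i, l, k))"
  by (simp add: sum.cartesian_product)

lemma GQ:
  fixes \<nu> :: "'a::topological_space set \<Rightarrow> complex^'n^'n"
  assumes pm: "pmm \<nu>" and f: "f \<in> borel_measurable borel" and bd: "\<And>x. \<bar>f x\<bar> \<le> B"
  shows "integral\<^sup>L (mm (qm \<nu> v)) f = Re (qform v (mat_integral \<nu> f))"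
proof -
  define w where "w i l k = axis i 1 + axis l (\<i>^k)" for i :: 'n and l :: 'n and k :: nat
  let ?J = "UNIV \<times> UNIV \<times> {..<(4::nat)}"
  define cc where "cc = (\<lambda>(i,l,k). cnj (v$i) * v$l * ((1/4) * cnj (\<i>^k)))"
  define c where "c j = Re (cc j)" for j
  define mj where "mj = (\<lambda>(i,l,k). qm \<nu> (w i l k))"
  have key: "(\<Sum>j\<in>?J. c j * g j) = Re (\<Sum>i\<in>UNIV. \<Sum>l\<in>UNIV. cnj (v$i) * v$l * ((1/4) * (\<Sum>k<4. cnj (\<i>^k) * complex_of_real (g (i,l,k)))))"
    for g :: "'n \<times> 'n \<times> nat \<Rightarrow> real"
  proof -
    have "(\<Sum>j\<in>?J. c j * g j) = Re (\<Sum>j\<in>?J. cc j * complex_of_real (g j))"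
      unfolding Re_sum by (intro sum.cong) (auto simp: c_def)
    also have "(\<Sum>j\<in>?J. cc j * complex_of_real (g j)) = (\<Sum>i\<in>UNIV. \<Sum>l\<in>UNIV. cnj (v$i) * v$l * ((1/4) * (\<Sum>k<4. cnj (\<i>^k) * complex_of_real (g (i,l,k)))))"
      unfolding sum_triple by (simp add: cc_def sum_distrib_left mult_ac)
    finally show ?thesis .
  qed
  have E: "qm \<nu> v A = (\<Sum>j\<in>?J. c j * mj j A)" if A: "A \<in> sets borel" for A
  proof -
    have ps: "psd_mat (\<nu> A)" using pm A by (simp add: pmm_def)
    have qr: "\<And>x. qform x (\<nu> A) = complex_of_real (qm \<nu> x A)"
      using psd_real[OF ps] by (simp add: qm_def)
    have ent: "\<nu> A $ i $ l = (1/4) * (\<Sum>k<4. cnj (\<i>^k) * complex_of_real (qm \<nu> (w i l k) A))" for i l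
      using polar[of "\<nu> A" i l] by (simp only: qr w_def)
    have "qm \<nu> v A = Re (\<Sum>i\<in>UNIV. \<Sum>l\<in>UNIV. cnj (v$i) * v$l * \<nu> A $ i $ l)"
      by (simp add: qm_def qform_expand)
    also have "\<dots> = (\<Sum>j\<in>?J. c j * mj j A)"
      unfolding key[of "\<lambda>j. mj j A"] ent by (simp add: mj_def)
    finally show ?thesis .
  qed
  have caj: "\<And>j. j \<in> ?J \<Longrightarrow> ca (mj j)" using ca_qm[OF pm] by (auto simp: mj_def)
  have "integral\<^sup>L (mm (qm \<nu> v)) f = (\<Sum>j\<in>?J. c j * integral\<^sup>L (mm (mj j)) f)"
    by (rule int_comb[OF _ ca_qm[OF pm] caj E f bd]) auto
  also have "\<dots> = Re (qform v (mat_integral \<nu> f))"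
    unfolding key[of "\<lambda>j. integral\<^sup>L (mm (mj j)) f"]
    by (simp add: qform_expand mat_integral_def qmeasure_eq mj_def w_def)
  finally show ?thesis .
qed



lemma UNIV_num1: "(UNIV::1 set) = {1}" by auto

definition sc :: "('a::topological_space set \<Rightarrow> complex^1^1) \<Rightarrow> 'a set \<Rightarrow> real" where
  "sc \<mu>s A = Re (\<mu>s A $ 1 $ 1)"

definition emb :: "('a::topological_space set \<Rightarrow> real) \<Rightarrow> 'a set \<Rightarrow> complex^1^1" where
  "emb m0 A = (\<chi> i j. complex_of_real (if A \<in> sets borel then m0 A else 0))"

lemma cnj_mult_self: "cnj z * z = complex_of_real ((cmod z)\<^sup>2)"
  using complex_norm_square[of z] by (simp only: mult.commute)

lemma qform1: "qform w (M::complex^1^1) = complex_of_real ((cmod (w$1))\<^sup>2) * M$1$1"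
proof -
  have "qform w M = cnj (w$1) * w$1 * M$1$1"
    by (simp add: qform_def matrix_vector_mult_def UNIV_num1 mult_ac)
  then show ?thesis by (simp only: cnj_mult_self)
qed

lemma qm1: "qm (\<mu>s::'a::topological_space set \<Rightarrow> complex^1^1) w A = (cmod (w$1))\<^sup>2 * sc \<mu>s A"
  by (simp add: qm_def qform1 sc_def)

lemma sc_qm: "sc \<mu>s = qm \<mu>s (axis 1 1)"
  by (rule ext) (simp add: qm1 axis_def)

lemma int_scale:
  assumes "ca m" "ca m0" "\<And>A. A \<in> sets borel \<Longrightarrow> m A = c * m0 A"
    and f: "f \<in> borel_measurable borel" and bd: "\<And>x. \<bar>f x\<bar> \<le> B"
  shows "integral\<^sup>L (mm m) f = c * integral\<^sup>L (mm m0) f"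
  using int_comb[of "{()}" m "\<lambda>_. m0" "\<lambda>_. c" f B] assms by simp

lemma mat_integral_zero:
  assumes "\<And>v. integral\<^sup>L (mm (qm \<nu> v)) f = 0"
  shows "mat_integral \<nu> f = 0"
  using assms by (simp add: mat_integral_def qmeasure_eq vec_eq_iff)

lemma Cset_pmm: "\<nu> \<in> Cset m \<phi> \<Longrightarrow> pmm \<nu>"
  by (simp add: Cset_def pmm_def)

lemma Cset_int0:
  assumes "\<nu> \<in> Cset m \<phi>" "phiok m \<phi>" "r \<in> {1..m}"
  shows "integral\<^sup>L (mm (qm \<nu> v)) (\<phi> r) = 0"
proof -
  obtain B where fm: "\<phi> r \<in> borel_measurable borel" and B: "\<And>x. \<bar>\<phi> r x\<bar> \<le> B"
    using phiokE[OF assms(2,3)] by blast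
  have "mat_integral \<nu> (\<phi> r) = 0" using assms(1,3) by (simp add: Cset_def)
  then show ?thesis using GQ[OF Cset_pmm[OF assms(1)] fm B, of v] by simp
qed

lemma Cset1_D:
  fixes \<mu>s :: "'a::topological_space set \<Rightarrow> complex^1^1"
  assumes C: "\<mu>s \<in> Cset m \<phi>" and ph: "phiok m \<phi>"
  shows "sC m \<phi> (sc \<mu>s)" "\<And>A. A \<in> sets borel \<Longrightarrow> \<mu>s A $ 1 $ 1 = complex_of_real (sc \<mu>s A)"
    "\<And>A. A \<notin> sets borel \<Longrightarrow> \<mu>s A = 0" "\<mu>s = emb (sc \<mu>s)"
proof -
  have pm: "pmm \<mu>s" using C by (rule Cset_pmm)
  show ent: "\<And>A. A \<in> sets borel \<Longrightarrow> \<mu>s A $ 1 $ 1 = complex_of_real (sc \<mu>s A)"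
  proof -
    fix A :: "'a set" assume "A \<in> sets borel"
    then have "psd_mat (\<mu>s A)" using pm by (simp add: pmm_def)
    then have "qform (axis 1 1) (\<mu>s A) \<in> \<real>" by (simp add: psd_mat_def)
    then show "\<mu>s A $ 1 $ 1 = complex_of_real (sc \<mu>s A)" by (simp add: qform1 axis_def sc_def)
  qed
  show nb: "\<And>A. A \<notin> sets borel \<Longrightarrow> \<mu>s A = 0" using C by (simp add: Cset_def matrix_measure_def)
  show "\<mu>s = emb (sc \<mu>s)"
  proof
    fix A show "\<mu>s A = emb (sc \<mu>s) A"
      by (cases "A \<in> sets borel") (auto simp: vec_eq_iff emb_def ent nb)
  qed
  have ca: "ca (sc \<mu>s)" unfolding sc_qm by (rule ca_qm[OF pm])
  have "\<mu>s UNIV = mat 1" using C by (simp add: Cset_def)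
  then have u: "sc \<mu>s UNIV = 1" by (simp add: sc_def mat_def)
  have "\<forall>r\<in>{1..m}. integral\<^sup>L (mm (sc \<mu>s)) (\<phi> r) = 0"
    unfolding sc_qm using Cset_int0[OF C ph] by blast
  then show "sC m \<phi> (sc \<mu>s)" using ca u by (simp add: sC_def)
qed

lemma bl_emb: "bounded_linear (\<lambda>x::real. (\<chi> i j. complex_of_real x) :: complex^1^1)"
proof -
  have "linear (\<lambda>x::real. (\<chi> i j. complex_of_real x) :: complex^1^1)"
    by (intro linearI) (simp_all only: vec_eq_iff vector_scaleR_component vector_add_component vec_lambda_beta, simp_all add: scaleR_conv_of_real)
  then show ?thesis using linear_conv_bounded_linear by blast
qed

lemma emb_Cset:
  fixes m0 :: "'a::topological_space set \<Rightarrow> real"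
  assumes s: "sC m \<phi> m0" and ph: "phiok m \<phi>"
  shows "emb m0 \<in> Cset m \<phi>"
proof -
  have ca0: "ca m0" and u0: "m0 UNIV = 1" and i0: "\<forall>r\<in>{1..m}. integral\<^sup>L (mm m0) (\<phi> r) = 0"
    using s by (auto simp: sC_def)
  have mm: "matrix_measure (emb m0)"
    unfolding matrix_measure_def
  proof safe
    fix A :: "'a set" assume "A \<notin> sets borel" then show "emb m0 A = 0" by (simp add: emb_def vec_eq_iff)
  next
    fix F :: "nat \<Rightarrow> 'a set" assume F: "range F \<subseteq> sets borel" "disjoint_family F"
    then have "(\<lambda>n. m0 (F n)) sums m0 (\<Union>n. F n)" using ca0 by (simp add: ca_def)
    from bounded_linear.sums[OF bl_emb this]
    show "(\<lambda>n. emb m0 (F n)) sums emb m0 (\<Union>n. F n)"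
      using F by (simp add: emb_def subset_eq sets.countable_UN)
  qed
  have psd: "\<forall>A\<in>sets borel. psd_mat (emb m0 A)"
    using ca0 by (auto simp: psd_mat_def qform1 emb_def ca_def)
  have pm: "pmm (emb m0)" using mm psd by (simp add: pmm_def)
  have U: "emb m0 UNIV = mat 1" using u0 by (simp add: emb_def mat_def vec_eq_iff)
  have "mat_integral (emb m0) (\<phi> r) = 0" if r: "r \<in> {1..m}" for r
  proof (rule mat_integral_zero)
    fix v :: "complex^1"
    obtain B where fm: "\<phi> r \<in> borel_measurable borel" and B: "\<And>x. \<bar>\<phi> r x\<bar> \<le> B"
      using phiokE[OF ph r] by blast
    have "integral\<^sup>L (mm (qm (emb m0) v)) (\<phi> r) = (cmod (v$1))\<^sup>2 * integral\<^sup>L (mm m0) (\<phi> r)"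
      by (rule int_scale[OF ca_qm[OF pm] ca0 _ fm B]) (simp add: qm1 sc_def emb_def)
    then show "integral\<^sup>L (mm (qm (emb m0) v)) (\<phi> r) = 0" using i0 r by simp
  qed
  then show ?thesis using mm psd U by (simp add: Cset_def)
qed

lemma emb_borel: "A \<in> sets borel \<Longrightarrow> emb m0 A $ 1 $ 1 = complex_of_real (m0 A)"
  by (simp add: emb_def)

lemma ext_transfer:
  fixes \<mu>s :: "'a::topological_space set \<Rightarrow> complex^1^1"
  assumes e: "extreme_point_mm \<mu>s (Cset m \<phi>)" and ph: "phiok m \<phi>"
  shows "sext m \<phi> (sc \<mu>s)"
proof -
  have C: "\<mu>s \<in> Cset m \<phi>" using e by (simp add: extreme_point_mm_def)
  note D = Cset1_D[OF C ph]
  have "\<forall>A\<in>sets borel. m1 A = m2 A"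
    if s1: "sC m \<phi> m1" and s2: "sC m \<phi> m2" and t: "0 < t" "t < 1"
      and eq: "\<forall>A\<in>sets borel. sc \<mu>s A = t * m1 A + (1 - t) * m2 A" for m1 m2 t
  proof -
    have "\<mu>s = (\<lambda>A. t *\<^sub>R emb m1 A + (1 - t) *\<^sub>R emb m2 A)"
    proof
      fix A show "\<mu>s A = t *\<^sub>R emb m1 A + (1 - t) *\<^sub>R emb m2 A"
      proof (cases "A \<in> sets borel")
        case True
        have "(t *\<^sub>R emb m1 A + (1 - t) *\<^sub>R emb m2 A) $ i $ j = complex_of_real (t * m1 A + (1 - t) * m2 A)" for i j
          using True by (simp only: vector_scaleR_component vector_add_component emb_def vec_lambda_beta if_True)
            (simp add: scaleR_conv_of_real)
        then show ?thesis using D(2)[OF True] eq True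
          by (simp add: vec_eq_iff)
      next
        case False
        then show ?thesis using D(3)[OF False] by (simp add: vec_eq_iff emb_def)
      qed
    qed
    then have "emb m1 = emb m2"
      using e emb_Cset[OF s1 ph] emb_Cset[OF s2 ph] t unfolding extreme_point_mm_def by blast
    then show ?thesis using emb_borel[of _ m1] emb_borel[of _ m2] by (metis of_real_eq_iff)
  qed
  then show ?thesis using D(1) by (auto simp: sext_def)
qed



lemma qform_comb:
  "qform (x + c *s y) (M::complex^'n^'n) = qform x M + c * cinner x (M *v y) + cnj c * cinner y (M *v x) + cnj c * c * qform y M"
  by (simp add: qform_cinner mv_add mv_scale cinner_add_left cinner_add_right cinner_scale_left cinner_scale_right algebra_simps)

lemma psd_herm:
  assumes "psd_mat (M::complex^'n^'n)"
  shows "cinner y (M *v x) = cnj (cinner x (M *v y))"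
proof -
  let ?a = "cinner x (M *v y)" and ?b = "cinner y (M *v x)"
  have R: "\<And>v. Im (qform v M) = 0" using assms by (simp add: psd_mat_def complex_is_Real_iff)
  have q1: "qform (x + 1 *s y) M = qform x M + 1 * ?a + cnj 1 * ?b + cnj 1 * 1 * qform y M" by (rule qform_comb)
  have q2: "qform (x + \<i> *s y) M = qform x M + \<i> * ?a + cnj \<i> * ?b + cnj \<i> * \<i> * qform y M" by (rule qform_comb)
  have "Im (qform (x + 1 *s y) M) = 0" by (rule R)
  then have e1: "Im ?a + Im ?b = 0" using R[of x] R[of y] unfolding q1 by simp
  have "Im (qform (x + \<i> *s y) M) = 0" by (rule R)
  then have e2: "Re ?a - Re ?b = 0" using R[of x] R[of y] unfolding q2 by simp
  show ?thesis using e1 e2 by (intro complex_eqI) simp_all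
qed

lemma sCq:
  assumes C: "\<nu> \<in> Cset m \<phi>" and ph: "phiok m \<phi>" and v: "cinner v v = 1"
  shows "sC m \<phi> (qm \<nu> v)"
proof -
  have "\<nu> UNIV = mat 1" using C by (simp add: Cset_def)
  then have "qm \<nu> v UNIV = 1" using v by (simp add: qm_def qform_cinner)
  then show ?thesis using ca_qm[OF Cset_pmm[OF C]] Cset_int0[OF C ph] by (simp add: sC_def)
qed

lemma OFFM:
  fixes \<nu> :: "'a::topological_space set \<Rightarrow> complex^'n^'n"
  assumes ph: "phiok m \<phi>" and C: "\<nu> \<in> Cset m \<phi>" and e: "sext m \<phi> mj" and sk: "sC m \<phi> mk"
    and xx: "cinner x x = 1" and yy: "cinner y y = 1" and xy: "cinner x y = 0"
    and dx: "\<And>A. A \<in> sets borel \<Longrightarrow> qform x (\<nu> A) = complex_of_real (mj A)"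
    and dy: "\<And>A. A \<in> sets borel \<Longrightarrow> qform y (\<nu> A) = complex_of_real (mk A)"
  shows "\<forall>A\<in>sets borel. cinner x (\<nu> A *v y) = 0"
proof -
  have pm: "pmm \<nu>" using C by (rule Cset_pmm)
  define c where "c A = cinner x (\<nu> A *v y)" for A
  have ps: "\<And>A. A \<in> sets borel \<Longrightarrow> psd_mat (\<nu> A)" using pm by (simp add: pmm_def)
  have herm: "\<And>A. A \<in> sets borel \<Longrightarrow> cinner y (\<nu> A *v x) = cnj (c A)"
    unfolding c_def by (rule psd_herm[OF ps])
  have cak: "ca mk" using sk by (simp add: sC_def)
  have hz: "c A = 0" if A: "A \<in> sets borel" and z: "mj A = 0" for A
  proof (rule ccontr)
    assume nz: "c A \<noteq> 0"
    define n where "n = (cmod (c A))\<^sup>2"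
    have n0: "0 < n" using nz by (simp add: n_def)
    define s where "s = (mk A + 1) / n"
    define \<gamma> where "\<gamma> = - (complex_of_real s * c A)"
    have "qform (y + \<gamma> *s x) (\<nu> A) = complex_of_real (mk A) + \<gamma> * cnj (c A) + cnj \<gamma> * c A"
      using dx[OF A] dy[OF A] herm[OF A] z by (simp add: qform_comb c_def)
    also have "\<dots> = complex_of_real (mk A - 2 * s * n)"
    proof -
      have "c A * cnj (c A) = complex_of_real n" unfolding n_def by (rule complex_norm_square[symmetric])
      moreover have "cnj (c A) * c A = complex_of_real n" by (simp add: n_def cnj_mult_self)
      ultimately show ?thesis by (simp add: \<gamma>_def algebra_simps)
    qed
    finally have "Re (qform (y + \<gamma> *s x) (\<nu> A)) = mk A - 2 * s * n" by simp
    moreover have "0 \<le> Re (qform (y + \<gamma> *s x) (\<nu> A))" using ps[OF A] by (simp add: psd_mat_def)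
    moreover have "s * n = mk A + 1" using n0 by (simp add: s_def)
    moreover have "0 \<le> mk A" using cak A by (simp add: ca_def)
    ultimately show False by linarith
  qed
  have key: "\<forall>A\<in>sets borel. Re (\<gamma> * c A) = 0" if g: "cnj \<gamma> * \<gamma> = 1" for \<gamma>
  proof -
    define p where "p = qm \<nu> (x + \<gamma> *s y)"
    have cap: "ca p" unfolding p_def by (rule ca_qm[OF pm])
    have ip: "\<forall>r\<in>{1..m}. integral\<^sup>L (mm p) (\<phi> r) = 0" unfolding p_def using Cset_int0[OF C ph] by blast
    have "\<nu> UNIV = mat 1" using C by (simp add: Cset_def)
    moreover have "qform (x + \<gamma> *s y) (mat 1) = qform x (mat 1) + \<gamma> * cinner x (mat 1 *v y) + cnj \<gamma> * cinner y (mat 1 *v x) + cnj \<gamma> * \<gamma> * qform y (mat 1)"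
      by (rule qform_comb)
    ultimately have pU: "p UNIV = 2"
      using xx yy xy g by (simp add: p_def qm_def qform_cinner cinner_cnj[of y x])
    have hp: "\<forall>A\<in>sets borel. p A = mj A + mk A + 2 * Re (\<gamma> * c A)"
    proof
      fix A :: "'a set" assume A: "A \<in> sets borel"
      have "qform (x + \<gamma> *s y) (\<nu> A) = complex_of_real (mj A) + \<gamma> * c A + cnj \<gamma> * cnj (c A) + complex_of_real (mk A)"
        using dx[OF A] dy[OF A] herm[OF A] g by (simp add: qform_comb c_def)
      moreover have "Re (cnj \<gamma> * cnj (c A)) = Re (\<gamma> * c A)"
      proof -
        have "cnj \<gamma> * cnj (c A) = cnj (\<gamma> * c A)" by simp
        then show ?thesis by simp
      qed
      ultimately show "p A = mj A + mk A + 2 * Re (\<gamma> * c A)" by (simp add: p_def qm_def)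
    qed
    have hz': "\<forall>A\<in>sets borel. mj A = 0 \<longrightarrow> Re (\<gamma> * c A) = 0" using hz by simp
    show ?thesis by (rule OFF[OF e ph sk cap ip pU hp hz'])
  qed
  have k1: "\<forall>A\<in>sets borel. Re (1 * c A) = 0" by (rule key) simp
  have k2: "\<forall>A\<in>sets borel. Re (\<i> * c A) = 0" by (rule key) simp
  show ?thesis
  proof
    fix A :: "'a set" assume "A \<in> sets borel"
    then have "Re (c A) = 0" "Im (c A) = 0" using k1 k2 by auto
    then show "cinner x (\<nu> A *v y) = 0" by (simp add: c_def complex_eq_iff)
  qed
qed



lemma MAIN:
  fixes u :: "'n::finite \<Rightarrow> complex^'n" and mk :: "'n \<Rightarrow> 'a::topological_space set \<Rightarrow> real"
    and \<mu> \<nu>1 \<nu>2 :: "'a set \<Rightarrow> complex^'n^'n"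
  assumes ph: "phiok m \<phi>"
    and on: "\<And>j k. cinner (u j) (u k) = (if j = k then 1 else 0)"
    and ex: "\<And>x. x = (\<Sum>k\<in>UNIV. cinner (u k) x *s u k)"
    and ext: "\<And>k. sext m \<phi> (mk k)"
    and muB: "\<And>A x. A \<in> sets borel \<Longrightarrow> \<mu> A *v x = (\<Sum>k\<in>UNIV. complex_of_real (mk k A) *s (cinner (u k) x *s u k))"
    and muN: "\<And>A. A \<notin> sets borel \<Longrightarrow> \<mu> A = 0"
    and n1: "\<nu>1 \<in> Cset m \<phi>" and n2: "\<nu>2 \<in> Cset m \<phi>" and t: "0 < t" "t < 1"
    and mu: "\<mu> = (\<lambda>A. t *\<^sub>R \<nu>1 A + (1 - t) *\<^sub>R \<nu>2 A)"
  shows "\<nu>1 = \<mu>"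
proof -
  have muk: "\<mu> A *v u k = complex_of_real (mk k A) *s u k" if "A \<in> sets borel" for A k
  proof -
    have "\<mu> A *v u k = (\<Sum>j\<in>UNIV. if j = k then complex_of_real (mk k A) *s u k else 0)"
      unfolding muB[OF that] by (intro sum.cong) (auto simp: on)
    then show ?thesis by simp
  qed
  have qmu: "qm \<mu> (u k) A = mk k A" if A: "A \<in> sets borel" for k A
    using on[of k k] by (simp add: qm_def qform_cinner muk[OF A] cinner_scale_right)
  have qmt: "qm \<mu> w A = t * qm \<nu>1 w A + (1 - t) * qm \<nu>2 w A" for w A
    by (simp add: mu qm_def qform_add qform_scaleR)
  have diag: "qm \<nu>1 (u k) A = mk k A" if A: "A \<in> sets borel" for k A
  proof -
    have s1: "sC m \<phi> (qm \<nu>1 (u k))" using sCq[OF n1 ph] on[of k k] by simp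
    have s2: "sC m \<phi> (qm \<nu>2 (u k))" using sCq[OF n2 ph] on[of k k] by simp
    have eq: "\<forall>A\<in>sets borel. mk k A = t * qm \<nu>1 (u k) A + (1 - t) * qm \<nu>2 (u k) A"
      using qmu qmt by metis
    have "\<forall>A\<in>sets borel. qm \<nu>1 (u k) A = qm \<nu>2 (u k) A"
      using ext[of k] s1 s2 t eq unfolding sext_def by blast
    then show ?thesis using eq A by (auto simp: algebra_simps)
  qed
  have pm1: "pmm \<nu>1" using n1 by (rule Cset_pmm)
  have dq: "qform (u k) (\<nu>1 A) = complex_of_real (mk k A)" if A: "A \<in> sets borel" for k A
  proof -
    have "psd_mat (\<nu>1 A)" using pm1 A by (simp add: pmm_def)
    then have "qform (u k) (\<nu>1 A) = complex_of_real (Re (qform (u k) (\<nu>1 A)))" by (rule psd_real)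
    also have "Re (qform (u k) (\<nu>1 A)) = mk k A" using diag[OF A, of k] by (simp add: qm_def)
    finally show ?thesis .
  qed
  have off: "cinner (u j) (\<nu>1 A *v u k) = 0" if jk: "j \<noteq> k" and A: "A \<in> sets borel" for j k A
  proof -
    have sk: "sC m \<phi> (mk k)" using ext[of k] by (simp add: sext_def)
    have "\<forall>A\<in>sets borel. cinner (u j) (\<nu>1 A *v u k) = 0"
      by (rule OFFM[OF ph n1 ext[of j] sk]) (use on jk dq in auto)
    then show ?thesis using A by blast
  qed
  have col: "\<nu>1 A *v u k = complex_of_real (mk k A) *s u k" if A: "A \<in> sets borel" for k A
  proof -
    have "\<nu>1 A *v u k = (\<Sum>j\<in>UNIV. cinner (u j) (\<nu>1 A *v u k) *s u j)" by (rule ex)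
    also have "\<dots> = (\<Sum>j\<in>UNIV. if j = k then complex_of_real (mk k A) *s u k else 0)"
      by (intro sum.cong) (auto simp: off A dq[OF A] qform_cinner[symmetric])
    finally show ?thesis by simp
  qed
  have "\<nu>1 A = \<mu> A" for A
  proof (cases "A \<in> sets borel")
    case True
    have "\<nu>1 A *v x = \<mu> A *v x" for x
    proof -
      have "\<nu>1 A *v x = \<nu>1 A *v (\<Sum>k\<in>UNIV. cinner (u k) x *s u k)" by (rule arg_cong[OF ex])
      also have "\<dots> = (\<Sum>k\<in>UNIV. cinner (u k) x *s (\<nu>1 A *v u k))" by (simp add: mv_sum_right mv_scale)
      also have "\<dots> = \<mu> A *v x" unfolding muB[OF True, of x] col[OF True]
        by (simp add: vector_smult_assoc mult.commute)
      finally show ?thesis .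
    qed
    then show ?thesis using matrix_eq by blast
  next
    case False
    then show ?thesis using muN[OF False] n1 by (simp add: Cset_def matrix_measure_def)
  qed
  then show ?thesis by auto
qed



lemma cmat_scale_1: "cmat_scale 1 A = A" by (simp add: cmat_scale_def vec_eq_iff)
lemma cmat_scale_0: "cmat_scale 0 A = 0" by (simp add: cmat_scale_def vec_eq_iff)

lemma bl_cms: "bounded_linear (\<lambda>M::complex^1^1. cmat_scale (M$1$1) (P::complex^'n^'n))"
proof -
  have "linear (\<lambda>M::complex^1^1. cmat_scale (M$1$1) (P::complex^'n^'n))"
  proof (rule linearI)
    fix x y :: "complex^1^1"
    show "cmat_scale ((x + y)$1$1) P = cmat_scale (x$1$1) P + cmat_scale (y$1$1) P"
      by (simp add: cmat_scale_def vec_eq_iff distrib_right)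
  next
    fix r :: real and x :: "complex^1^1"
    show "cmat_scale ((r *\<^sub>R x)$1$1) P = r *\<^sub>R cmat_scale (x$1$1) P"
      by (simp only: vec_eq_iff vector_scaleR_component cmat_scale_def vec_lambda_beta)
        (simp add: scaleR_conv_of_real)
  qed
  then show ?thesis using linear_conv_bounded_linear by blast
qed

theorem theorem3p14:
  fixes \<phi> :: "nat \<Rightarrow> 'a::t2_space \<Rightarrow> real" and m :: nat
    and P :: "'n::finite \<Rightarrow> complex^'n^'n"
    and \<mu>s :: "'n \<Rightarrow> 'a set \<Rightarrow> complex^1^1"
    and \<mu> :: "'a set \<Rightarrow> complex^'n^'n"
  assumes "compact (UNIV :: 'a set)"
    and "\<forall>r\<in>{1..m}. continuous_on UNIV (\<phi> r)"
    and "\<forall>k. rank_one_orth_proj (P k)"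
    and "\<forall>j k. j \<noteq> k \<longrightarrow> P j ** P k = 0"
    and "(\<Sum>k\<in>UNIV. P k) = mat 1"
    and "\<forall>k. extreme_point_mm (\<mu>s k) (Cset m \<phi>)"
    and "\<forall>A. \<mu> A = (\<Sum>k\<in>UNIV. cmat_scale (\<mu>s k A $ 1 $ 1) (P k))"
  shows "extreme_point_mm \<mu> (Cset m \<phi>)"
proof -
  note comp = assms(1) and cont = assms(2) and proj = assms(3) and orth = assms(4) and sumP = assms(5)
    and extr = assms(6) and muf = assms(7)
  have ph: "phiok m \<phi>"
    unfolding phiok_def
  proof
    fix r assume r: "r \<in> {1..m}"
    have c: "continuous_on UNIV (\<phi> r)" using cont r by blast
    have "compact (\<phi> r ` UNIV)" by (rule compact_continuous_image[OF c comp])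
    then have "bounded (\<phi> r ` UNIV)" by (rule compact_imp_bounded)
    then obtain B where "\<forall>y\<in>\<phi> r ` UNIV. norm y \<le> B" by (auto simp: bounded_iff)
    then have "\<forall>x. \<bar>\<phi> r x\<bar> \<le> B" by auto
    then show "\<phi> r \<in> borel_measurable borel \<and> (\<exists>B. \<forall>x. \<bar>\<phi> r x\<bar> \<le> B)"
      using borel_measurable_continuous_onI[OF c] by blast
  qed
  have "\<forall>k. \<exists>v. cinner v v = 1 \<and> (\<forall>x. P k *v x = cinner v x *s v)"
  proof
    fix k
    obtain v where "cinner v v = 1" "\<And>x. P k *v x = cinner v x *s v"
      using rank_one_proj_vec[of "P k"] proj by blast
    then show "\<exists>v. cinner v v = 1 \<and> (\<forall>x. P k *v x = cinner v x *s v)" by blast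
  qed
  then obtain u where uu: "\<And>k. cinner (u k) (u k) = 1" and Pu: "\<And>k x. P k *v x = cinner (u k) x *s u k"
    by metis
  have adj: "\<And>k. adjoint_mat (P k) = P k" using proj by (simp add: rank_one_orth_proj_def)
  have Puk: "\<And>k. P k *v u k = u k" by (simp add: Pu uu)
  have on: "cinner (u j) (u k) = (if j = k then 1 else 0)" for j k
  proof (cases "j = k")
    case True then show ?thesis by (simp add: uu)
  next
    case False
    have "cinner (u j) (u k) = cinner (P j *v u j) (P k *v u k)" by (simp add: Puk)
    also have "\<dots> = cinner (u j) (P j *v (P k *v u k))"
      using cinner_adj[of "u j" "P j" "P k *v u k"] adj by simp
    also have "\<dots> = 0" using orth False by (simp add: matrix_vector_mul_assoc)
    finally show ?thesis using False by simp
  qed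
  have ex: "x = (\<Sum>k\<in>UNIV. cinner (u k) x *s u k)" for x
  proof -
    have "x = mat 1 *v x" by simp
    also have "\<dots> = (\<Sum>k\<in>UNIV. P k *v x)" unfolding sumP[symmetric] by (rule mv_sum_left)
    finally show ?thesis by (simp add: Pu)
  qed
  define mk where "mk k = sc (\<mu>s k)" for k
  have C: "\<And>k. \<mu>s k \<in> Cset m \<phi>" using extr by (simp add: extreme_point_mm_def)
  have ext: "\<And>k. sext m \<phi> (mk k)" unfolding mk_def using ext_transfer[OF _ ph] extr by blast
  have sCk: "\<And>k. sC m \<phi> (mk k)" using ext by (simp add: sext_def)
  have caK: "\<And>k. ca (mk k)" using sCk by (simp add: sC_def)
  have ent: "\<And>k A. A \<in> sets borel \<Longrightarrow> \<mu>s k A $ 1 $ 1 = complex_of_real (mk k A)"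
    unfolding mk_def using Cset1_D(2)[OF C ph] by blast
  have nb: "\<And>k A. A \<notin> sets borel \<Longrightarrow> \<mu>s k A = 0"
    using Cset1_D(3)[OF C ph] by blast
  have muB: "\<mu> A *v x = (\<Sum>k\<in>UNIV. complex_of_real (mk k A) *s (cinner (u k) x *s u k))"
    if A: "A \<in> sets borel" for A x
    unfolding muf[rule_format] mv_sum_left by (simp add: mv_cmat_scale ent[OF A] Pu)
  have muN: "\<mu> A = 0" if A: "A \<notin> sets borel" for A
    unfolding muf[rule_format] by (simp add: nb[OF A] cmat_scale_0)
  have qmuv: "qform v (\<mu> A) = complex_of_real (\<Sum>k\<in>UNIV. (cmod (cinner (u k) v))\<^sup>2 * mk k A)"
    if A: "A \<in> sets borel" for A v
  proof -
    have "qform v (\<mu> A) = (\<Sum>k\<in>UNIV. complex_of_real (mk k A) * (cinner (u k) v * cnj (cinner (u k) v)))"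
      by (simp add: qform_cinner muB[OF A] cinner_sum_right cinner_scale_right cinner_cnj[of v] mult_ac)
    also have "\<dots> = complex_of_real (\<Sum>k\<in>UNIV. (cmod (cinner (u k) v))\<^sup>2 * mk k A)"
      by (simp add: complex_norm_square[symmetric] mult_ac)
    finally show ?thesis .
  qed
  have mm: "matrix_measure \<mu>"
    unfolding matrix_measure_def
  proof safe
    fix A :: "'a set" assume "A \<notin> sets borel" then show "\<mu> A = 0" by (rule muN)
  next
    fix F :: "nat \<Rightarrow> 'a set" assume F: "range F \<subseteq> sets borel" "disjoint_family F"
    have "\<And>k. (\<lambda>n. cmat_scale (\<mu>s k (F n) $ 1 $ 1) (P k)) sums cmat_scale (\<mu>s k (\<Union>n. F n) $ 1 $ 1) (P k)"
    proof -
      fix k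
      have "matrix_measure (\<mu>s k)" using C[of k] by (simp add: Cset_def)
      from mm_sums[OF bl_cms[of "P k"] this F]
      show "(\<lambda>n. cmat_scale (\<mu>s k (F n) $ 1 $ 1) (P k)) sums cmat_scale (\<mu>s k (\<Union>n. F n) $ 1 $ 1) (P k)" .
    qed
    then have "(\<lambda>n. \<Sum>k\<in>UNIV. cmat_scale (\<mu>s k (F n) $ 1 $ 1) (P k)) sums (\<Sum>k\<in>UNIV. cmat_scale (\<mu>s k (\<Union>n. F n) $ 1 $ 1) (P k))"
      by (rule sums_sum)
    then show "(\<lambda>n. \<mu> (F n)) sums \<mu> (\<Union>n. F n)" by (simp add: muf)
  qed
  have psd: "\<forall>A\<in>sets borel. psd_mat (\<mu> A)"
  proof
    fix A :: "'a set" assume A: "A \<in> sets borel"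
    have "0 \<le> (\<Sum>k\<in>UNIV. (cmod (cinner (u k) v))\<^sup>2 * mk k A)" for v
      using caK A by (intro sum_nonneg mult_nonneg_nonneg) (auto simp: ca_def)
    then show "psd_mat (\<mu> A)" by (simp add: psd_mat_def qmuv[OF A])
  qed
  have pm: "pmm \<mu>" using mm psd by (simp add: pmm_def)
  have U: "\<mu> UNIV = mat 1"
  proof -
    have "\<And>k. \<mu>s k UNIV = mat 1" using C by (simp add: Cset_def)
    then show ?thesis unfolding muf[rule_format] by (simp add: mat_def cmat_scale_1 sumP)
  qed
  have I: "mat_integral \<mu> (\<phi> r) = 0" if r: "r \<in> {1..m}" for r
  proof (rule mat_integral_zero)
    fix v
    obtain B where fm: "\<phi> r \<in> borel_measurable borel" and B: "\<And>x. \<bar>\<phi> r x\<bar> \<le> B"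
      using phiokE[OF ph r] by blast
    have "integral\<^sup>L (mm (qm \<mu> v)) (\<phi> r) = (\<Sum>k\<in>UNIV. (cmod (cinner (u k) v))\<^sup>2 * integral\<^sup>L (mm (mk k)) (\<phi> r))"
      by (rule int_comb[OF _ ca_qm[OF pm] caK _ fm B]) (auto simp: qm_def qmuv)
    also have "\<dots> = 0" using sCk r by (simp add: sC_def)
    finally show "integral\<^sup>L (mm (qm \<mu> v)) (\<phi> r) = 0" .
  qed
  have inC: "\<mu> \<in> Cset m \<phi>" using mm psd U I by (simp add: Cset_def)
  show ?thesis
    unfolding extreme_point_mm_def
  proof (intro conjI inC ballI allI impI)
    fix \<nu>1 \<nu>2 t assume n1: "\<nu>1 \<in> Cset m \<phi>" and n2: "\<nu>2 \<in> Cset m \<phi>"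
      and h: "0 < t \<and> t < 1 \<and> \<mu> = (\<lambda>A. t *\<^sub>R \<nu>1 A + (1 - t) *\<^sub>R \<nu>2 A)"
    have e1: "\<nu>1 = \<mu>"
      by (rule MAIN[OF ph on ex ext muB muN n1 n2]) (use h in auto)
    have eq2: "\<mu> = (\<lambda>A. (1 - t) *\<^sub>R \<nu>2 A + (1 - (1 - t)) *\<^sub>R \<nu>1 A)" using h by (auto simp: add.commute)
    have e2: "\<nu>2 = \<mu>"
      by (rule MAIN[where t="1 - t", OF ph on ex ext muB muN n2 n1 _ _ eq2]) (use h in auto)
    show "\<nu>1 = \<nu>2" using e1 e2 by simp
  qed
qed


end
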